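(* Let $\mathcal H=\{h_1,\dots,h_k\}$ be a set of $k\ge2$ distinct integers with $0\notin\mathcal H$ such that $\mathcal H^0=\mathcal H\cup\{0\}$ is admissible, and let $1\le\ell\le k$. If $r<R$ and $(r,A_0)=1$, then \[ y^\dagger_{r,\ell}=\mu^2(r)\frac{\mathfrak S(\mathcal H^0)}{\ell!}(\log R/r)^\ell+O\big(\mu^2(r)\beta(\mathcal H^0)\mathfrak S(\mathcal H^0)(\log 2R/r)^{\ell-1}\big), \] with implied constant depending only on $k$.
   Context: For a finite set $\mathcal K$ of $m$ distinct integers: - $\nu_p(\mathcal K)$ is the number of residue classes mod $p$ occupied by $\mathcal K$, and for squarefree $d$, $\nu_d(\mathcal K)=\prod_{p\mid d}\nu_p(\mathcal K)$; - $\mathfrak S(\mathcal K)=\prod_p(1-\nu_p(\mathcal K)/p)(1-1/p)^{-m}$ and $\beta(\mathcal K)=\sum_p(m-\nu_p(\mathcal K))\log p/p$; - $\mathcal K$ is admissible if $\nu_p(\mathcal K)<p$ for all $p$. Write $\nu_p=\nu_p(\mathcal H)$. For squarefree $d$, let $f(d)=\prod_{p\mid d}p/\nu_p$ and $f_1(d)=\prod_{p\mid d}(p-\nu_p)/\nu_p$. For $R>1$, \[ \lambda_{d,\ell}=\mu(d)\frac{f(d)}{f_1(d)}\frac{\mathfrak S(\mathcal H)}{\ell!}\sum_{r<R/d,(r,d)=1}\frac{\mu^2(r)}{f_1(r)}(\log\tfrac R{rd})^\ell\quad\text{for } d<R, \] and $\lambda_{d,\ell}=0$ for $d\ge R$.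 Let $\nu_p^\dagger=\nu_p(\mathcal H^0)-1$, and let $A_0$ be the product of the primes with $\nu_p^\dagger=0$. For squarefree $r$ coprime to $A_0$, let $f^\dagger(r)=\prod_{p\mid r}(p-1)/\nu_p^\dagger$ and $f_1^\dagger(r)=\prod_{p\mid r}(p-1-\nu_p^\dagger)/\nu_p^\dagger$. Define \[ y^\dagger_{r,\ell}=\mu(r)f_1^\dagger(r)\sum_{(d,A_0)=1}\frac{\lambda_{dr,\ell}}{f^\dagger(dr)} \] if $(r,A_0)=1$ and $r<R$, and $y^\dagger_{r,\ell}=0$ otherwise. *)

theory Defs
  imports "HOL-Analysis.Analysis" "HOL-Computational_Algebra.Squarefree"
begin

definition moebius :: "nat \<Rightarrow> int" where
  "moebius d = (if squarefree d then (-1) ^ card (prime_factors d) else 0)"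

definition nu :: "nat \<Rightarrow> int set \<Rightarrow> nat" where
  "nu p K = card ((\<lambda>h. h mod int p) ` K)"

definition admissible :: "int set \<Rightarrow> bool" where
  "admissible K \<longleftrightarrow> (\<forall>p. prime p \<longrightarrow> nu p K < p)"

definition sing :: "int set \<Rightarrow> real" where
  "sing K = (\<Prod>p. if prime p
      then (1 - real (nu p K) / real p) / (1 - 1 / real p) ^ card K else 1)"

definition beta :: "int set \<Rightarrow> real" where
  "beta K = (\<Sum>p. if prime p
      then (real (card K) - real (nu p K)) * ln (real p) / real p else 0)"

definition fH :: "int set \<Rightarrow> nat \<Rightarrow> real" where
  "fH H d = (\<Prod>p\<in>prime_factors d. real p / real (nu p H))"

definition f1H :: "int set \<Rightarrow> nat \<Rightarrow> real" where
  "f1H H d = (\<Prod>p\<in>prime_factors d. (real p - real (nu p H)) / real (nu p H))"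

definition lam :: "int set \<Rightarrow> real \<Rightarrow> nat \<Rightarrow> nat \<Rightarrow> real" where
  "lam H R l d = (if real d < R then
      real_of_int (moebius d) * fH H d / f1H H d * sing H / fact l *
      (\<Sum>r\<in>{r::nat. 0 < r \<and> real r < R / real d \<and> coprime r d}.
          real_of_int ((moebius r)\<^sup>2) / f1H H r * (ln (R / (real r * real d))) ^ l)
    else 0)"

definition nudag :: "int set \<Rightarrow> nat \<Rightarrow> nat" where
  "nudag H p = nu p (insert 0 H) - 1"

definition A0 :: "int set \<Rightarrow> nat" where
  "A0 H = \<Prod>{p. prime p \<and> nudag H p = 0}"

definition fdag :: "int set \<Rightarrow> nat \<Rightarrow> real" where
  "fdag H r = (\<Prod>p\<in>prime_factors r. (real p - 1) / real (nudag H p))"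

definition f1dag :: "int set \<Rightarrow> nat \<Rightarrow> real" where
  "f1dag H r = (\<Prod>p\<in>prime_factors r. (real p - 1 - real (nudag H p)) / real (nudag H p))"

text \<open>y-dagger_{r,l}; the sum over d is over positive d coprime to A0; terms with
  d r \<ge> R vanish since lambda_{dr,l} = 0, so we sum only over d r < R.\<close>
definition ydag :: "int set \<Rightarrow> real \<Rightarrow> nat \<Rightarrow> nat \<Rightarrow> real" where
  "ydag H R l r = (if coprime r (A0 H) \<and> real r < R then
      real_of_int (moebius r) * f1dag H r *
      (\<Sum>d\<in>{d::nat. 0 < d \<and> coprime d (A0 H) \<and> real (d * r) < R}.
          lam H R l (d * r) / fdag H (d * r))
    else 0)"

end

theory Submission
  imports Defs
begin


lemma pf_prod_primes:
  assumes "finite S" "\<forall>p\<in>S. prime (p::nat)"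
  shows "prime_factors (\<Prod>S) = S"
proof -
  have nz: "\<Prod>S \<noteq> 0" using assms by (auto simp: prime_gt_0_nat)
  show ?thesis
  proof (intro set_eqI iffI)
    fix q assume "q \<in> prime_factors (\<Prod>S)"
    hence q: "prime q" "q dvd \<Prod>S" by (auto simp: prime_factors_dvd)
    then obtain p where "p \<in> S" "q dvd p" using prime_dvd_prod_iff[OF assms(1) q(1)] by auto
    thus "q \<in> S" using assms q by (metis primes_dvd_imp_eq)
  next
    fix q assume "q \<in> S"
    thus "q \<in> prime_factors (\<Prod>S)" using assms nz
      by (auto simp: prime_factors_dvd dvd_prod_eqI)
  qed
qed

lemma sqf_prod_primes:
  assumes "finite S" "\<forall>p\<in>S. prime (p::nat)"
  shows "squarefree (\<Prod>S)"
  using assms by (intro squarefree_prod_coprime) (auto simp: primes_coprime squarefree_prime)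

lemma prod_pf_sqf:
  assumes "squarefree (n::nat)" "n > 0"
  shows "\<Prod>(prime_factors n) = n"
proof -
  have "(\<Prod>p \<in> prime_factors n. p ^ multiplicity p n) = n"
    using prod_prime_factors[of n] assms by simp
  moreover have "\<forall>p\<in>prime_factors n. multiplicity p n = 1"
    using assms squarefree_factorial_semiring'[of n] by auto
  ultimately show ?thesis by (metis (no_types, lifting) power_one_right prod.cong)
qed

lemma moebius_prod_primes:
  assumes "finite S" "\<forall>p\<in>S. prime (p::nat)"
  shows "moebius (\<Prod>S) = (-1) ^ card S"
  using assms by (simp add: moebius_def sqf_prod_primes pf_prod_primes)


lemma coprime_prod_primes:
  assumes "finite T" "finite E" "\<forall>p\<in>T. prime (p::nat)" "\<forall>p\<in>E. prime p"
  shows "coprime (\<Prod>T) (\<Prod>E) \<longleftrightarrow> T \<inter> E = {}"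
proof
  assume c: "coprime (\<Prod>T) (\<Prod>E)"
  show "T \<inter> E = {}"
  proof (rule ccontr)
    assume "T \<inter> E \<noteq> {}"
    then obtain p where p: "p \<in> T" "p \<in> E" by auto
    hence "p dvd \<Prod>T" "p dvd \<Prod>E" using assms by (auto intro: dvd_prod_eqI)
    hence "is_unit p" using c coprime_common_divisor by metis
    thus False using assms p not_prime_unit by blast
  qed
next
  assume d: "T \<inter> E = {}"
  show "coprime (\<Prod>T) (\<Prod>E)"
  proof (rule prod_coprime_left, rule prod_coprime_right)
    fix x y assume "x \<in> T" "y \<in> E"
    hence "prime x" "prime y" "x \<noteq> y" using assms d by auto
    thus "coprime x y" by (simp add: primes_coprime)
  qed
qed


lemma power_diff_le:
  fixes a b :: real
  assumes "0 \<le> b" "b \<le> a"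
  shows "a ^ l - b ^ l \<le> real l * a ^ (l - 1) * (a - b)"
proof -
  have "a ^ l - b ^ l = (a - b) * (\<Sum>i<l. b ^ (l - Suc i) * a ^ i)"
    by (rule power_diff_sumr2)
  also have "(\<Sum>i<l. b ^ (l - Suc i) * a ^ i) \<le> (\<Sum>i<l. a ^ (l - 1))"
  proof (rule sum_mono)
    fix i assume i: "i \<in> {..<l}"
    have "b ^ (l - Suc i) * a ^ i \<le> a ^ (l - Suc i) * a ^ i"
      using assms by (intro mult_right_mono power_mono) auto
    also have "\<dots> = a ^ (l - 1)" using i by (simp add: power_add[symmetric])
    finally show "b ^ (l - Suc i) * a ^ i \<le> a ^ (l - 1)" .
  qed
  hence "(a - b) * (\<Sum>i<l. b ^ (l - Suc i) * a ^ i) \<le> (a - b) * (\<Sum>i<l. a ^ (l - 1))"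
    using assms by (intro mult_left_mono) auto
  finally show ?thesis by (simp add: algebra_simps)
qed


lemma phi_bound:
  fixes L s :: real
  assumes "0 \<le> L" "0 \<le> s" "l \<ge> 1"
  shows "\<bar>(if s < L then (L - s) ^ l else 0) - L ^ l\<bar> \<le> real l * L ^ (l - 1) * s"
proof (cases "s < L")
  case True
  have "L ^ l - (L - s) ^ l \<le> real l * L ^ (l - 1) * (L - (L - s))"
    using assms True by (intro power_diff_le) auto
  moreover have "(L - s) ^ l \<le> L ^ l" using assms True by (intro power_mono) auto
  ultimately show ?thesis using True by simp
next
  case False
  have "L ^ l = L * L ^ (l - 1)" using assms by (cases l) auto
  also have "\<dots> \<le> s * L ^ (l - 1)" using False assms by (intro mult_right_mono) auto
  also have "\<dots> \<le> real l * (s * L ^ (l - 1))" using assms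
    by (intro mult_right_mono[of 1 "real l", simplified]) auto
  also have "\<dots> = real l * L ^ (l - 1) * s" by (simp add: mult_ac)
  finally show ?thesis using False assms by simp
qed

lemma sum_pow_prod:
  fixes g :: "'a \<Rightarrow> real"
  assumes "finite A"
  shows "(\<Sum>M\<in>Pow A. \<Prod>p\<in>M. g p) = (\<Prod>p\<in>A. 1 + g p)"
  using prod_add[OF assms, of g "\<lambda>_. 1"] by (simp add: add.commute)


lemma U_bound:
  fixes g lam :: "'a \<Rightarrow> real"
  assumes "finite A" "\<forall>p\<in>A. lam p \<ge> 0"
  shows "(\<Sum>M\<in>Pow A. (\<Prod>p\<in>M. \<bar>g p\<bar>) * (\<Sum>p\<in>M. lam p))
      \<le> (\<Sum>p\<in>A. \<bar>g p\<bar> * lam p) * (\<Prod>p\<in>A. 1 + \<bar>g p\<bar>)"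
  using assms
proof (induction A rule: finite_induct)
  case empty
  then show ?case by simp
next
  case (insert a A)
  let ?U = "\<lambda>A. (\<Sum>M\<in>Pow A. (\<Prod>p\<in>M. \<bar>g p\<bar>) * (\<Sum>p\<in>M. lam p))"
  have IH: "?U A \<le> (\<Sum>p\<in>A. \<bar>g p\<bar> * lam p) * (\<Prod>p\<in>A. 1 + \<bar>g p\<bar>)"
    using insert by auto
  have dis: "Pow A \<inter> insert a ` Pow A = {}" using insert by auto
  have inj: "inj_on (insert a) (Pow A)"
  proof (rule inj_onI)
    fix x y assume xy: "x \<in> Pow A" "y \<in> Pow A" "insert a x = insert a y"
    have "x = insert a x - {a}" "y = insert a y - {a}" using xy insert(2) by auto
    thus "x = y" using xy(3) by simp
  qed
  have "?U (insert a A) = ?U A + (\<Sum>M\<in>insert a ` Pow A. (\<Prod>p\<in>M. \<bar>g p\<bar>) * (\<Sum>p\<in>M. lam p))"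
    unfolding Pow_insert using insert dis by (intro sum.union_disjoint) auto
  also have "(\<Sum>M\<in>insert a ` Pow A. (\<Prod>p\<in>M. \<bar>g p\<bar>) * (\<Sum>p\<in>M. lam p))
     = (\<Sum>M\<in>Pow A. \<bar>g a\<bar> * (\<Prod>p\<in>M. \<bar>g p\<bar>) * (lam a + (\<Sum>p\<in>M. lam p)))"
  proof (subst sum.reindex[OF inj], intro sum.cong refl)
    fix M assume M: "M \<in> Pow A"
    hence "a \<notin> M" "finite M" using insert finite_subset by auto
    thus "((\<lambda>M. (\<Prod>p\<in>M. \<bar>g p\<bar>) * (\<Sum>p\<in>M. lam p)) \<circ> insert a) M =
         \<bar>g a\<bar> * (\<Prod>p\<in>M. \<bar>g p\<bar>) * (lam a + (\<Sum>p\<in>M. lam p))" by simp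
  qed
  also have "\<dots> = \<bar>g a\<bar> * lam a * (\<Sum>M\<in>Pow A. (\<Prod>p\<in>M. \<bar>g p\<bar>)) + \<bar>g a\<bar> * ?U A"
    by (simp add: sum_distrib_left sum.distrib algebra_simps)
  also have "(\<Sum>M\<in>Pow A. (\<Prod>p\<in>M. \<bar>g p\<bar>)) = (\<Prod>p\<in>A. 1 + \<bar>g p\<bar>)"
    using sum_pow_prod[OF insert(1), of "\<lambda>p. \<bar>g p\<bar>"] by simp
  finally have e: "?U (insert a A) = (1 + \<bar>g a\<bar>) * ?U A + \<bar>g a\<bar> * lam a * (\<Prod>p\<in>A. 1 + \<bar>g p\<bar>)"
    by (simp add: algebra_simps)
  have P0: "(\<Prod>p\<in>A. 1 + \<bar>g p\<bar>) \<ge> 0" by (intro prod_nonneg) auto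
  have S0: "(\<Sum>p\<in>A. \<bar>g p\<bar> * lam p) \<ge> 0" using insert by (intro sum_nonneg) auto
  have la: "lam a \<ge> 0" using insert by auto
  have "?U (insert a A) \<le> (1 + \<bar>g a\<bar>) * ((\<Sum>p\<in>A. \<bar>g p\<bar> * lam p) * (\<Prod>p\<in>A. 1 + \<bar>g p\<bar>))
        + \<bar>g a\<bar> * lam a * (\<Prod>p\<in>A. 1 + \<bar>g p\<bar>)"
    unfolding e using la by (intro add_mono mult_left_mono IH) auto
  also have "\<dots> \<le> (\<bar>g a\<bar> * lam a + (\<Sum>p\<in>A. \<bar>g p\<bar> * lam p)) * ((1 + \<bar>g a\<bar>) * (\<Prod>p\<in>A. 1 + \<bar>g p\<bar>))"
    using P0 S0 la by (simp add: algebra_simps mult_nonneg_nonneg)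
  finally show ?case using insert by simp
qed

lemma key_bound:
  fixes g lam :: "'a \<Rightarrow> real" and L :: real
  assumes "finite A" "\<forall>p\<in>A. lam p \<ge> 0" "L \<ge> 0" "l \<ge> 1"
  shows "\<bar>(\<Sum>M\<in>Pow A. (\<Prod>p\<in>M. g p) * (if (\<Sum>p\<in>M. lam p) < L then (L - (\<Sum>p\<in>M. lam p)) ^ l else 0))
          - (\<Prod>p\<in>A. 1 + g p) * L ^ l\<bar>
      \<le> real l * L ^ (l - 1) * ((\<Sum>p\<in>A. \<bar>g p\<bar> * lam p) * (\<Prod>p\<in>A. 1 + \<bar>g p\<bar>))"
proof -
  let ?s = "\<lambda>M. \<Sum>p\<in>M. lam p"
  have fin: "\<And>M. M \<in> Pow A \<Longrightarrow> finite M" using assms finite_subset by auto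
  have s0: "\<And>M. M \<in> Pow A \<Longrightarrow> ?s M \<ge> 0" using assms by (auto intro!: sum_nonneg)
  have "(\<Prod>p\<in>A. 1 + g p) * L ^ l = (\<Sum>M\<in>Pow A. (\<Prod>p\<in>M. g p) * L ^ l)"
    by (subst sum_pow_prod[OF assms(1), symmetric]) (simp add: sum_distrib_right)
  hence "\<bar>(\<Sum>M\<in>Pow A. (\<Prod>p\<in>M. g p) * (if ?s M < L then (L - ?s M) ^ l else 0))
          - (\<Prod>p\<in>A. 1 + g p) * L ^ l\<bar>
       = \<bar>\<Sum>M\<in>Pow A. (\<Prod>p\<in>M. g p) * ((if ?s M < L then (L - ?s M) ^ l else 0) - L ^ l)\<bar>"
    by (simp add: sum_subtractf algebra_simps)
  also have "\<dots> \<le> (\<Sum>M\<in>Pow A. \<bar>(\<Prod>p\<in>M. g p) * ((if ?s M < L then (L - ?s M) ^ l else 0) - L ^ l)\<bar>)"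
    by (rule sum_abs)
  also have "\<dots> \<le> (\<Sum>M\<in>Pow A. real l * L ^ (l - 1) * ((\<Prod>p\<in>M. \<bar>g p\<bar>) * ?s M))"
  proof (rule sum_mono)
    fix M assume M: "M \<in> Pow A"
    have "\<bar>(\<Prod>p\<in>M. g p) * ((if ?s M < L then (L - ?s M) ^ l else 0) - L ^ l)\<bar>
        = (\<Prod>p\<in>M. \<bar>g p\<bar>) * \<bar>(if ?s M < L then (L - ?s M) ^ l else 0) - L ^ l\<bar>"
      by (simp add: abs_mult abs_prod)
    also have "\<dots> \<le> (\<Prod>p\<in>M. \<bar>g p\<bar>) * (real l * L ^ (l - 1) * ?s M)"
      by (intro mult_left_mono phi_bound s0 M assms prod_nonneg) auto
    finally show "\<bar>(\<Prod>p\<in>M. g p) * ((if ?s M < L then (L - ?s M) ^ l else 0) - L ^ l)\<bar>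
        \<le> real l * L ^ (l - 1) * ((\<Prod>p\<in>M. \<bar>g p\<bar>) * ?s M)" by (simp add: mult_ac)
  qed
  also have "\<dots> = real l * L ^ (l - 1) * (\<Sum>M\<in>Pow A. (\<Prod>p\<in>M. \<bar>g p\<bar>) * ?s M)"
    by (simp add: sum_distrib_left)
  also have "\<dots> \<le> real l * L ^ (l - 1) * ((\<Sum>p\<in>A. \<bar>g p\<bar> * lam p) * (\<Prod>p\<in>A. 1 + \<bar>g p\<bar>))"
    using assms by (intro mult_left_mono U_bound) auto
  finally show ?thesis .
qed

lemma pow_double_sum:
  fixes F :: "'a set \<Rightarrow> 'a set \<Rightarrow> real"
  assumes "finite A"
  shows "(\<Sum>D\<in>Pow A. \<Sum>T\<in>Pow (A - D). F D T) = (\<Sum>M\<in>Pow A. \<Sum>D\<in>Pow M. F D (M - D))"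
proof -
  have fA: "\<And>X. X \<subseteq> A \<Longrightarrow> finite X" using assms finite_subset by auto
  have e: "\<And>a b. b \<subseteq> A - a \<Longrightarrow> a \<union> b - a = b" by auto
  have "(\<Sum>D\<in>Pow A. \<Sum>T\<in>Pow (A - D). F D T) = (\<Sum>(D,T)\<in>Sigma (Pow A) (\<lambda>D. Pow (A - D)). F D T)"
    using assms by (intro sum.Sigma) auto
  also have "\<dots> = (\<Sum>(M,D)\<in>Sigma (Pow A) Pow. F D (M - D))"
    by (rule sum.reindex_bij_witness[where i = "\<lambda>(M,D). (D, M - D)" and j = "\<lambda>(D,T). (D \<union> T, D)"]) (use e in auto)
  also have "\<dots> = (\<Sum>M\<in>Pow A. \<Sum>D\<in>Pow M. F D (M - D))"
    using assms fA by (intro sum.Sigma[symmetric]) auto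
  finally show ?thesis .
qed


lemma sum_sqf_reindex:
  fixes F :: "nat \<Rightarrow> real" and B :: real and Q :: nat
  assumes "B \<le> real Q + 1" and "\<And>n. \<not> squarefree n \<Longrightarrow> F n = 0"
  shows "(\<Sum>n\<in>{n. 0<n \<and> real n < B \<and> C n}. F n)
       = (\<Sum>T\<in>{T. T \<subseteq> {p. prime p \<and> p \<le> Q} \<and> real (\<Prod>T) < B \<and> C (\<Prod>T)}. F (\<Prod>T))"
proof -
  let ?PP = "{p. prime p \<and> p \<le> Q}"
  let ?Ts = "{T. T \<subseteq> ?PP \<and> real (\<Prod>T) < B \<and> C (\<Prod>T)}"
  let ?N = "{n. 0<n \<and> real n < B \<and> C n}"
  have finPP: "finite ?PP" by (rule finite_subset[of _ "{..Q}"]) auto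
  have finT: "finite T" if "T \<in> ?Ts" for T
  proof -
    have "T \<subseteq> ?PP" using that by blast
    thus ?thesis using finPP by (rule finite_subset)
  qed
  have inj: "inj_on (\<lambda>T. \<Prod>T) ?Ts"
  proof (rule inj_onI)
    fix T1 T2 assume T: "T1 \<in> ?Ts" "T2 \<in> ?Ts" "\<Prod>T1 = \<Prod>T2"
    have f: "finite T1" "finite T2" using finT T(1,2) by blast+
    have pr: "\<forall>p\<in>T1. prime p" "\<forall>p\<in>T2. prime p" using T(1,2) by blast+
    have "prime_factors (\<Prod>T1) = T1" "prime_factors (\<Prod>T2) = T2"
      using pf_prod_primes[OF f(1) pr(1)] pf_prod_primes[OF f(2) pr(2)] by blast+
    thus "T1 = T2" using T(3) by metis
  qed
  have sub: "(\<lambda>T. \<Prod>T) ` ?Ts \<subseteq> ?N"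
  proof
    fix n assume "n \<in> (\<lambda>T. \<Prod>T) ` ?Ts"
    then obtain T where T: "T \<in> ?Ts" "n = \<Prod>T" by blast
    have "\<forall>p\<in>T. prime p" using T(1) by blast
    hence "\<Prod>T > 0" by (intro prod_pos) (auto simp: prime_gt_0_nat)
    thus "n \<in> ?N" using T by (simp del: of_nat_prod)
  qed
  have finN: "finite ?N"
  proof (rule finite_subset)
    show "?N \<subseteq> {..Q}"
    proof
      fix n assume "n \<in> ?N"
      hence "real n < real Q + 1" using assms(1) by auto
      thus "n \<in> {..Q}" by simp
    qed
  qed auto
  have zero: "\<forall>n\<in>?N - (\<lambda>T. \<Prod>T) ` ?Ts. F n = 0"
  proof
    fix n assume n0: "n \<in> ?N - (\<lambda>T. \<Prod>T) ` ?Ts"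
    have nN: "n \<in> ?N" and nI: "n \<notin> (\<lambda>T. \<Prod>T) ` ?Ts" using n0 unfolding Diff_iff by (rule conjunct1, rule conjunct2)
    have n: "0 < n" "real n < B" "C n" using nN by simp_all
    show "F n = 0"
    proof (cases "squarefree n")
      case True
      have "prime_factors n \<subseteq> ?PP"
      proof
        fix p assume p: "p \<in> prime_factors n"
        hence "prime p" "p dvd n" by (auto simp: prime_factors_dvd)
        hence "p \<le> n" using n by (simp add: dvd_imp_le)
        moreover have "real n < real Q + 1" using n assms(1) by linarith
        ultimately show "p \<in> ?PP" using \<open>prime p\<close> by auto
      qed
      moreover have "\<Prod>(prime_factors n) = n" using True n by (intro prod_pf_sqf) simp_all
      moreover have "real n < B" "C n" using n by simp_all
      ultimately have "prime_factors n \<in> ?Ts" by (simp del: of_nat_prod)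
      have "n \<in> (\<lambda>T. \<Prod>T) ` ?Ts"
        by (rule image_eqI[where x="prime_factors n"], rule sym, fact, fact)
      thus ?thesis using nI by blast
    next
      case False thus ?thesis by (rule assms(2))
    qed
  qed
  have "(\<Sum>n\<in>?N. F n) = (\<Sum>n\<in>(\<lambda>T. \<Prod>T) ` ?Ts. F n)"
    by (rule sum.mono_neutral_right[OF finN sub zero])
  also have "\<dots> = (\<Sum>T\<in>?Ts. F (\<Prod>T))"
    by (subst sum.reindex[OF inj]) simp
  finally show ?thesis .
qed


lemma nu_le_card: "finite K \<Longrightarrow> nu p K \<le> card K"
  unfolding nu_def by (rule card_image_le)

lemma nu_pos: "finite K \<Longrightarrow> K \<noteq> {} \<Longrightarrow> nu p K \<ge> 1"
  unfolding nu_def by (simp add: Suc_le_eq card_gt_0_iff)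

lemma nu_insert: "finite K \<Longrightarrow> nu p (insert x K) = nu p K \<or> nu p (insert x K) = nu p K + 1"
  unfolding nu_def by (simp add: card_insert_if)

lemma nu_inj:
  assumes "finite K" "prime p" "real p > 2 * (\<Sum>h\<in>K. \<bar>real_of_int h\<bar>)"
  shows "nu p K = card K"
proof -
  have "inj_on (\<lambda>h. h mod int p) K"
  proof (rule inj_onI)
    fix a b assume ab: "a \<in> K" "b \<in> K" "a mod int p = b mod int p"
    have la: "\<bar>real_of_int a\<bar> \<le> (\<Sum>h\<in>K. \<bar>real_of_int h\<bar>)"
      using ab(1) assms(1) by (intro member_le_sum) auto
    have lb: "\<bar>real_of_int b\<bar> \<le> (\<Sum>h\<in>K. \<bar>real_of_int h\<bar>)"
      using ab(2) assms(1) by (intro member_le_sum) auto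
    have d: "int p dvd (a - b)" using ab(3) by (simp add: mod_eq_dvd_iff)
    show "a = b"
    proof (rule ccontr)
      assume "a \<noteq> b"
      hence "a - b \<noteq> 0" by simp
      hence "int p \<le> \<bar>a - b\<bar>" using dvd_imp_le_int[OF _ d] by simp
      hence "real p \<le> \<bar>real_of_int a - real_of_int b\<bar>"
        by (metis of_int_abs of_int_diff of_int_le_iff of_int_of_nat_eq)
      thus False using la lb assms(3) by linarith
    qed
  qed
  thus ?thesis unfolding nu_def by (rule card_image)
qed

locale hset =
  fixes H :: "int set"
  assumes finH: "finite H" and cardH: "card H \<ge> 2" and zH: "0 \<notin> H"
    and adm: "admissible (insert 0 H)"
begin

abbreviation "H0 \<equiv> insert 0 H"

lemma Hne: "H \<noteq> {}" using cardH by auto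
lemma finH0: "finite H0" using finH by simp
lemma cardH0: "card H0 = card H + 1" using finH zH by simp

definition "Dbd = 2 * (\<Sum>h\<in>H0. \<bar>real_of_int h\<bar>)"

lemma nu0_big: "prime p \<Longrightarrow> real p > Dbd \<Longrightarrow> nu p H0 = card H + 1"
  using nu_inj[OF finH0, of p] cardH0 unfolding Dbd_def by simp

lemma nu_le0: "nu p H \<le> nu p H0"
  using nu_insert[OF finH, of p 0] by auto

lemma nu0_cases: "nu p H0 = nu p H \<or> nu p H0 = nu p H + 1"
  using nu_insert[OF finH, of p 0] by auto

lemma nu_ge1: "nu p H \<ge> 1" using nu_pos[OF finH Hne] .
lemma nu0_ge1: "nu p H0 \<ge> 1" using nu_pos[OF finH0] by simp
lemma nu0_lt: "prime p \<Longrightarrow> nu p H0 < p" using adm unfolding admissible_def by blast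
lemma nu_le_k: "nu p H \<le> card H" using nu_le_card[OF finH] .
lemma nu0_le: "nu p H0 \<le> card H + 1" using nu_le_card[OF finH0] cardH0 by simp

definition "S0 = {p. prime p \<and> nudag H p = 0}"

lemma S0_iff: "p \<in> S0 \<longleftrightarrow> prime p \<and> nu p H0 = 1"
  using nu0_ge1[of p] unfolding S0_def nudag_def by auto

lemma S0_fin: "finite S0"
proof (rule finite_subset)
  show "S0 \<subseteq> {..nat \<lceil>Dbd\<rceil>}"
  proof
    fix p assume p: "p \<in> S0"
    show "p \<in> {..nat \<lceil>Dbd\<rceil>}"
    proof (rule ccontr)
      assume "p \<notin> {..nat \<lceil>Dbd\<rceil>}"
      hence "real p > Dbd" by (simp add: not_le) linarith
      hence "nu p H0 = card H + 1" using p S0_iff nu0_big by blast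
      thus False using p S0_iff cardH by simp
    qed
  qed
qed simp

lemma A0_eq: "A0 H = \<Prod>S0"
  unfolding A0_def S0_def by simp

lemma S0_primes: "\<forall>p\<in>S0. prime p" using S0_iff by blast

definition g :: "nat \<Rightarrow> real" where
  "g p = (if nu p H0 = nu p H then 1 / (real p - 1)
          else - real (nu p H) / ((real p - real (nu p H)) * (real p - 1)))"

lemma nudag_real: "real (nudag H p) = real (nu p H0) - 1"
  using nu0_ge1[of p] unfolding nudag_def by (simp add: of_nat_diff)

end


context hset begin

definition "nv p = real (nu p H)"
definition "nv0 p = real (nu p H0)"
definition "a1 p = real p / (real p - nv p)"
definition "b1 p = nv p / (real p - nv p)"
definition "fdp p = (real p - 1) / (nv0 p - 1)"
definition "d1p p = (real p - 1 - (nv0 p - 1)) / (nv0 p - 1)"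
definition "PP Q = {p. prime p \<and> p \<le> (Q::nat)}"

lemma PP_fin: "finite (PP Q)"
  unfolding PP_def by (rule finite_subset[of _ "{..Q}"]) auto

lemma nv_ge1: "nv p \<ge> 1" unfolding nv_def using nu_ge1[of p] by simp
lemma nv_lt: "prime p \<Longrightarrow> nv p < real p"
  unfolding nv_def using nu0_lt[of p] nu_le0[of p] by simp
lemma nv0_lt: "prime p \<Longrightarrow> nv0 p < real p"
  unfolding nv0_def using nu0_lt[of p] by simp

lemma fH_prod: "finite E \<Longrightarrow> \<forall>p\<in>E. prime p \<Longrightarrow> fH H (\<Prod>E) = (\<Prod>p\<in>E. real p / nv p)"
  unfolding fH_def nv_def by (simp add: pf_prod_primes)
lemma f1H_prod: "finite E \<Longrightarrow> \<forall>p\<in>E. prime p \<Longrightarrow> f1H H (\<Prod>E) = (\<Prod>p\<in>E. (real p - nv p) / nv p)"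
  unfolding f1H_def nv_def by (simp add: pf_prod_primes)
lemma fdag_prod: "finite E \<Longrightarrow> \<forall>p\<in>E. prime p \<Longrightarrow> fdag H (\<Prod>E) = (\<Prod>p\<in>E. fdp p)"
  unfolding fdag_def fdp_def nv0_def by (simp add: pf_prod_primes nudag_real)
lemma f1dag_prod: "finite E \<Longrightarrow> \<forall>p\<in>E. prime p \<Longrightarrow> f1dag H (\<Prod>E) = (\<Prod>p\<in>E. d1p p)"
  unfolding f1dag_def d1p_def nv0_def by (simp add: pf_prod_primes nudag_real)

lemma PP_sub:
  assumes "E \<subseteq> PP Q"
  shows "finite E" "\<forall>p\<in>E. prime p"
proof -
  show "finite E" using finite_subset[OF assms PP_fin] .
  show "\<forall>p\<in>E. prime p" using assms unfolding PP_def by blast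
qed

lemma lamE:
  assumes Q: "R \<le> real Q" and E: "E \<subseteq> PP Q" and ER: "real (\<Prod>E) < R"
  shows "lam H R l (\<Prod>E) = (-1) ^ card E * (\<Prod>p\<in>E. a1 p) * sing H / fact l *
     (\<Sum>T\<in>{T. T \<subseteq> PP Q \<and> real (\<Prod>T) < R / real (\<Prod>E) \<and> T \<inter> E = {}}.
        (\<Prod>p\<in>T. b1 p) * (ln (R / (real (\<Prod>T) * real (\<Prod>E)))) ^ l)"
proof -
  have fE: "finite E" and pE: "\<forall>p\<in>E. prime p" using PP_sub[OF E] by auto
  have E1: "real (\<Prod>E) \<ge> 1"
  proof -
    have "\<Prod>E > 0" using pE by (intro prod_pos) (auto simp: prime_gt_0_nat)
    thus ?thesis by linarith
  qed
  have mu: "real_of_int (moebius (\<Prod>E)) = (-1) ^ card E"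
    using moebius_prod_primes[OF fE pE] by simp
  have ff: "fH H (\<Prod>E) / f1H H (\<Prod>E) = (\<Prod>p\<in>E. a1 p)"
  proof -
    have "fH H (\<Prod>E) / f1H H (\<Prod>E) = (\<Prod>p\<in>E. (real p / nv p) / ((real p - nv p) / nv p))"
      unfolding fH_prod[OF fE pE] f1H_prod[OF fE pE] by (rule prod_dividef[symmetric])
    also have "\<dots> = (\<Prod>p\<in>E. a1 p)"
    proof (rule prod.cong[OF refl])
      fix p assume "p \<in> E"
      have "nv p \<noteq> 0" using nv_ge1[of p] by linarith
      thus "(real p / nv p) / ((real p - nv p) / nv p) = a1 p" unfolding a1_def by (simp add: field_simps)
    qed
    finally show ?thesis .
  qed
  define F where "F = (\<lambda>r. real_of_int ((moebius r)\<^sup>2) / f1H H r * (ln (R / (real r * real (\<Prod>E)))) ^ l)"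
  have F0: "F n = 0" if "\<not> squarefree n" for n using that unfolding F_def moebius_def by simp
  have B: "R / real (\<Prod>E) \<le> real Q + 1"
  proof -
    have "R / real (\<Prod>E) \<le> R" using E1 ER by (simp add: divide_le_eq)
    thus ?thesis using Q by linarith
  qed
  have sumeq: "(\<Sum>r\<in>{r. 0 < r \<and> real r < R / real (\<Prod>E) \<and> coprime r (\<Prod>E)}. F r)
      = (\<Sum>T\<in>{T. T \<subseteq> PP Q \<and> real (\<Prod>T) < R / real (\<Prod>E) \<and> coprime (\<Prod>T) (\<Prod>E)}. F (\<Prod>T))"
    using sum_sqf_reindex[of "R / real (\<Prod>E)" Q F "\<lambda>r. coprime r (\<Prod>E)", OF B F0]
    unfolding PP_def by simp
  also have "\<dots> = (\<Sum>T\<in>{T. T \<subseteq> PP Q \<and> real (\<Prod>T) < R / real (\<Prod>E) \<and> T \<inter> E = {}}.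
        (\<Prod>p\<in>T. b1 p) * (ln (R / (real (\<Prod>T) * real (\<Prod>E)))) ^ l)"
  proof (rule sum.cong)
    show "{T. T \<subseteq> PP Q \<and> real (\<Prod>T) < R / real (\<Prod>E) \<and> coprime (\<Prod>T) (\<Prod>E)}
        = {T. T \<subseteq> PP Q \<and> real (\<Prod>T) < R / real (\<Prod>E) \<and> T \<inter> E = {}}"
    proof (intro Collect_cong conj_cong refl)
      fix T assume "T \<subseteq> PP Q"
      thus "coprime (\<Prod>T) (\<Prod>E) = (T \<inter> E = {})"
        using coprime_prod_primes[OF _ fE _ pE] PP_sub[of T Q] by blast
    qed
  next
    fix T assume "T \<in> {T. T \<subseteq> PP Q \<and> real (\<Prod>T) < R / real (\<Prod>E) \<and> T \<inter> E = {}}"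
    hence T: "T \<subseteq> PP Q" by blast
    have fT: "finite T" and pT: "\<forall>p\<in>T. prime p" using PP_sub[OF T] by auto
    have m2: "real_of_int ((moebius (\<Prod>T))\<^sup>2) = 1"
      using moebius_prod_primes[OF fT pT] by (simp add: power_even_eq[symmetric] power_mult_distrib)
    have "1 / f1H H (\<Prod>T) = (\<Prod>p\<in>T. b1 p)"
    proof -
      have "1 / f1H H (\<Prod>T) = (\<Prod>p\<in>T. 1 / ((real p - nv p) / nv p))"
        unfolding f1H_prod[OF fT pT] using prod_dividef[of "\<lambda>_. 1" "\<lambda>p. (real p - nv p) / nv p" T] by simp
      also have "\<dots> = (\<Prod>p\<in>T. b1 p)" unfolding b1_def by simp
      finally show ?thesis .
    qed
    thus "F (\<Prod>T) = (\<Prod>p\<in>T. b1 p) * (ln (R / (real (\<Prod>T) * real (\<Prod>E)))) ^ l"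
      unfolding F_def using m2 by simp
  qed
  finally have sumeq': "(\<Sum>r\<in>{r. 0 < r \<and> real r < R / real (\<Prod>E) \<and> coprime r (\<Prod>E)}. F r) = 
       (\<Sum>T\<in>{T. T \<subseteq> PP Q \<and> real (\<Prod>T) < R / real (\<Prod>E) \<and> T \<inter> E = {}}.
        (\<Prod>p\<in>T. b1 p) * (ln (R / (real (\<Prod>T) * real (\<Prod>E)))) ^ l)" .
  have L: "lam H R l (\<Prod>E) = real_of_int (moebius (\<Prod>E)) * fH H (\<Prod>E) / f1H H (\<Prod>E) * sing H / fact l
      * (\<Sum>r\<in>{r. 0 < r \<and> real r < R / real (\<Prod>E) \<and> coprime r (\<Prod>E)}. F r)"
    unfolding lam_def F_def using ER by (simp del: of_nat_prod)
  show ?thesis unfolding L sumeq' mu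
    by (simp only: ff[symmetric] times_divide_eq_right)
qed

end


lemma id1a:
  fixes x v :: real assumes a: "x - v \<noteq> 0" and b: "x - 1 \<noteq> 0" and c: "v - 1 \<noteq> 0"
  shows "((x - 1 - (v - 1)) / (v - 1)) * (x / (x - v)) / ((x - 1) / (v - 1)) = 1 + 1 / (x - 1)"
proof -
  have "((x - 1 - (v - 1)) / (v - 1)) * (x / (x - v)) = x / (v - 1)"
    using a by (simp add: divide_simps)
  moreover have "x / (v - 1) / ((x - 1) / (v - 1)) = x / (x - 1)" using b c by (simp add: divide_simps)
  moreover have "1 + 1 / (x - 1) = x / (x - 1)" using b by (simp add: divide_simps)
  ultimately show ?thesis by simp
qed
lemma id1b:
  fixes x v :: real assumes a: "x - v \<noteq> 0" and b: "x - 1 \<noteq> 0" and c: "v \<noteq> 0"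
  shows "((x - 1 - (v + 1 - 1)) / (v + 1 - 1)) * (x / (x - v)) / ((x - 1) / (v + 1 - 1)) = 1 + - v / ((x - v) * (x - 1))"
proof -
  have d: "(x - v) * (x - 1) \<noteq> 0" using a b by simp
  have "((x - 1 - (v + 1 - 1)) / (v + 1 - 1)) * (x / (x - v)) / ((x - 1) / (v + 1 - 1))
      = ((x - 1 - v) * x) / ((x - v) * (x - 1))"
    using a b c by (simp add: divide_simps)
  moreover have "1 + - v / ((x - v) * (x - 1)) = ((x - v) * (x - 1) - v) / ((x - v) * (x - 1))"
    using d by (simp add: divide_simps)
  moreover have "(x - v) * (x - 1) - v = (x - 1 - v) * x" by (simp add: algebra_simps)
  ultimately show ?thesis by simp
qed
lemma id2a:
  fixes x v :: real assumes a: "x - v \<noteq> 0" and b: "x - 1 \<noteq> 0" and c: "v - 1 \<noteq> 0"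
  shows "- ((x / (x - v)) / ((x - 1) / (v - 1))) + v / (x - v) = 1 / (x - 1)"
proof -
  have d: "(x - v) * (x - 1) \<noteq> 0" using a b by simp
  have "(x / (x - v)) / ((x - 1) / (v - 1)) = (x * (v - 1)) / ((x - v) * (x - 1))"
    using a b c by (simp add: divide_simps)
  moreover have "v / (x - v) = (v * (x - 1)) / ((x - v) * (x - 1))" using a b by (simp add: divide_simps)
  moreover have "1 / (x - 1) = (x - v) / ((x - v) * (x - 1))" using a b by (simp add: divide_simps)
  moreover have "- ((x * (v - 1)) / ((x - v) * (x - 1))) + (v * (x - 1)) / ((x - v) * (x - 1))
     = (- (x * (v - 1)) + v * (x - 1)) / ((x - v) * (x - 1))" by (simp only: add_divide_distrib minus_divide_left)
  moreover have "- (x * (v - 1)) + v * (x - 1) = x - v" by (simp add: algebra_simps)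
  ultimately show ?thesis by simp
qed
lemma id2b:
  fixes x v :: real assumes a: "x - v \<noteq> 0" and b: "x - 1 \<noteq> 0" and c: "v \<noteq> 0"
  shows "- ((x / (x - v)) / ((x - 1) / (v + 1 - 1))) + v / (x - v) = - v / ((x - v) * (x - 1))"
proof -
  have "(x / (x - v)) / ((x - 1) / (v + 1 - 1)) = (x * v) / ((x - v) * (x - 1))"
    using a b c by (simp add: divide_simps)
  moreover have "v / (x - v) = (v * (x - 1)) / ((x - v) * (x - 1))" using a b by (simp add: divide_simps)
  moreover have "- ((x * v) / ((x - v) * (x - 1))) + (v * (x - 1)) / ((x - v) * (x - 1))
     = (- (x * v) + v * (x - 1)) / ((x - v) * (x - 1))" by (simp only: add_divide_distrib minus_divide_left)
  moreover have "- (x * v) + v * (x - 1) = - v" by (simp add: algebra_simps)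
  ultimately show ?thesis by simp
qed

context hset begin

definition "hh p = (if p \<in> S0 then 0 else - (a1 p / fdp p))"

lemma prime_facts:
  assumes "prime p"
  shows "nv p \<ge> 1" "nv0 p < real p" "nv p \<le> nv0 p" "nv0 p = nv p \<or> nv0 p = nv p + 1" "real p \<ge> 2"
    "p \<notin> S0 \<longleftrightarrow> nv0 p \<noteq> 1"
proof -
  show "nv p \<ge> 1" by (rule nv_ge1)
  show "nv0 p < real p" using nv0_lt[OF assms] .
  show "nv p \<le> nv0 p" unfolding nv_def nv0_def using nu_le0[of p] by simp
  show "nv0 p = nv p \<or> nv0 p = nv p + 1" unfolding nv_def nv0_def using nu0_cases[of p] by auto
  show "real p \<ge> 2" using prime_ge_2_nat[OF assms] by simp
  show "p \<notin> S0 \<longleftrightarrow> nv0 p \<noteq> 1" unfolding nv0_def using S0_iff[of p] assms by simp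
qed

lemma g_alt: "g p = (if nv0 p = nv p then 1 / (real p - 1) else - nv p / ((real p - nv p) * (real p - 1)))"
  unfolding g_def nv_def nv0_def by simp

lemma I1:
  assumes "prime p" "p \<notin> S0"
  shows "d1p p * a1 p / fdp p = 1 + g p"
proof -
  note f = prime_facts[OF assms(1)]
  have n1: "nv0 p \<noteq> 1" using f(6) assms(2) by blast
  have p1: "real p - 1 \<noteq> 0" "real p - nv p \<noteq> 0" "nv p \<noteq> 0" using f by linarith+
  show ?thesis
  proof (cases "nv0 p = nv p")
    case True
    have n2: "nv p - 1 \<noteq> 0" using n1 True by simp
    have "g p = 1 / (real p - 1)" using True by (simp add: g_alt)
    thus ?thesis unfolding d1p_def a1_def fdp_def True using id1a[OF p1(2,1) n2] by simp
  next
    case False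
    hence e: "nv0 p = nv p + 1" using f(4) by simp
    have "g p = - nv p / ((real p - nv p) * (real p - 1))" using False by (simp add: g_alt)
    thus ?thesis unfolding d1p_def a1_def fdp_def e using id1b[OF p1(2,1,3)] by simp
  qed
qed

lemma I2:
  assumes "prime p"
  shows "hh p + b1 p = g p"
proof -
  note f = prime_facts[OF assms(1)]
  have p1: "real p - 1 \<noteq> 0" "real p - nv p \<noteq> 0" "nv p \<noteq> 0" using f by linarith+
  show ?thesis
  proof (cases "p \<in> S0")
    case True
    hence "nv0 p = 1" using f(6) by blast
    hence "nv p = 1" "nv0 p = nv p" using f(1,3) by linarith+
    thus ?thesis unfolding hh_def b1_def g_alt using True by simp
  next
    case False
    have n1: "nv0 p \<noteq> 1" using f(6) False by blast
    show ?thesis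
    proof (cases "nv0 p = nv p")
      case True
      have n2: "nv p - 1 \<noteq> 0" using n1 True by simp
      have "g p = 1 / (real p - 1)" using True by (simp add: g_alt)
      thus ?thesis unfolding hh_def b1_def a1_def fdp_def True using id2a[OF p1(2,1) n2] False by simp
    next
      case c: False
      hence e: "nv0 p = nv p + 1" using f(4) by simp
      have "g p = - nv p / ((real p - nv p) * (real p - 1))" using c by (simp add: g_alt)
      thus ?thesis unfolding hh_def b1_def a1_def fdp_def e using id2b[OF p1(2,1,3)] False by simp
    qed
  qed
qed

end


declare of_nat_prod[simp del]

lemma alg:
  fixes m d s pD pR S fl X fD fR :: real
  assumes "m * m = 1"
  shows "(m * d) * ((s * m) * (pD * pR) * S / fl * X / (fD * fR)) = S / fl * (d * pR / fR) * (s * (pD / fD)) * X"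
proof -
  have "(m * d) * ((s * m) * (pD * pR) * S / fl * X / (fD * fR)) = (m * m) * (d * ((s) * (pD * pR) * S / fl * X / (fD * fR)))"
    by (simp add: mult_ac)
  also have "\<dots> = d * (s * (pD * pR) * S / fl * X / (fD * fR))" using assms by simp
  also have "\<dots> = S / fl * (d * pR / fR) * (s * (pD / fD)) * X"
    by (simp add: divide_inverse inverse_mult_distrib mult_ac)
  finally show ?thesis .
qed

lemma not_sqf_prod:
  assumes "p \<in> D" "p \<in> Rr" "finite D" "finite Rr" "prime (p::nat)"
  shows "\<not> squarefree (\<Prod>D * \<Prod>Rr)"
proof
  assume s: "squarefree (\<Prod>D * \<Prod>Rr)"
  have "p dvd \<Prod>D" by (rule dvd_prod_eqI[OF assms(3) assms(1)]) simp
  have "p dvd \<Prod>Rr" by (rule dvd_prod_eqI[OF assms(4) assms(2)]) simp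
  have "p * p dvd \<Prod>D * \<Prod>Rr" by (rule mult_dvd_mono) fact+
  hence "p ^ 2 dvd \<Prod>D * \<Prod>Rr" by (simp only: power2_eq_square)
  hence "is_unit p" using s by (intro squarefreeD)
  thus False using assms(5) not_prime_unit by blast
qed

context hset begin

lemma lam_nsqf: "\<not> squarefree n \<Longrightarrow> lam H R l n = 0"
  unfolding lam_def moebius_def by simp

lemma ydag_expand:
  assumes Q: "R \<le> real Q" and r: "squarefree r" "0 < r" "real r < R" "coprime r (A0 H)"
  shows "ydag H R l r = sing H / fact l * (\<Prod>p\<in>prime_factors r. 1 + g p) *
    (\<Sum>M\<in>Pow (PP Q - prime_factors r). (\<Prod>p\<in>M. g p) *
        (if real (\<Prod>M) * real r < R then (ln (R / (real (\<Prod>M) * real r))) ^ l else 0))"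
proof -
  define Rr where "Rr = prime_factors r"
  have rR: "\<Prod>Rr = r" unfolding Rr_def using r by (intro prod_pf_sqf) auto
  have fRr: "finite Rr" unfolding Rr_def by simp
  have pRr: "\<forall>p\<in>Rr. prime p" unfolding Rr_def by auto
  have RrPP: "Rr \<subseteq> PP Q"
  proof
    fix p assume p: "p \<in> Rr"
    hence "prime p" "p dvd r" unfolding Rr_def by (auto simp: prime_factors_dvd)
    hence "p \<le> r" using r(2) by (simp add: dvd_imp_le)
    hence "real p \<le> real Q" using r(3) Q by linarith
    thus "p \<in> PP Q" using \<open>prime p\<close> unfolding PP_def by simp
  qed
  have RrS0: "Rr \<inter> S0 = {}"
    using r(4) unfolding A0_eq rR[symmetric] using coprime_prod_primes[OF fRr S0_fin pRr S0_primes] by blast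
  define A where "A = PP Q - Rr"
  have fA: "finite A" unfolding A_def using PP_fin by simp
  have APP: "A \<subseteq> PP Q" unfolding A_def by blast
  have r1: "real r \<ge> 1" using r(2) by simp
  have rpos: "real r > 0" using r(2) by simp
  define G where "G = (\<lambda>d. lam H R l (d * r) / fdag H (d * r))"
  have setq: "{d. 0 < d \<and> coprime d (A0 H) \<and> real (d * r) < R} = {d. 0<d \<and> real d < R / real r \<and> coprime d (A0 H)}"
    using rpos by (auto simp: pos_less_divide_eq)
  have y1: "ydag H R l r = real_of_int (moebius r) * f1dag H r *
      (\<Sum>d\<in>{d. 0<d \<and> real d < R / real r \<and> coprime d (A0 H)}. G d)"
    unfolding ydag_def G_def setq using r by simp
  have B: "R / real r \<le> real Q + 1"
  proof -
    have "R / real r \<le> R" using r1 r(3) by (simp add: divide_le_eq)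
    thus ?thesis using Q by linarith
  qed
  have G0: "G d = 0" if "\<not> squarefree d" for d
  proof -
    have "\<not> squarefree (d * r)" using that squarefree_multD(1) by blast
    thus ?thesis unfolding G_def by (simp add: lam_nsqf)
  qed
  have y2: "(\<Sum>d\<in>{d. 0<d \<and> real d < R / real r \<and> coprime d (A0 H)}. G d)
      = (\<Sum>D\<in>{D. D \<subseteq> PP Q \<and> real (\<Prod>D) < R / real r \<and> coprime (\<Prod>D) (A0 H)}. G (\<Prod>D))"
    using sum_sqf_reindex[of "R / real r" Q G "\<lambda>d. coprime d (A0 H)", OF B G0]
    unfolding PP_def by simp
  define DS where "DS = {D. D \<subseteq> A \<and> real (\<Prod>D) < R / real r \<and> D \<inter> S0 = {}}"
  have set3: "{D. D \<subseteq> PP Q \<and> real (\<Prod>D) < R / real r \<and> coprime (\<Prod>D) (A0 H)}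
      = {D. D \<subseteq> PP Q \<and> real (\<Prod>D) < R / real r \<and> D \<inter> S0 = {}}"
  proof (intro Collect_cong conj_cong refl)
    fix D assume "D \<subseteq> PP Q"
    thus "coprime (\<Prod>D) (A0 H) = (D \<inter> S0 = {})"
      unfolding A0_eq using coprime_prod_primes[OF _ S0_fin _ S0_primes] PP_sub[of D Q] by blast
  qed
  have y3: "(\<Sum>D\<in>{D. D \<subseteq> PP Q \<and> real (\<Prod>D) < R / real r \<and> D \<inter> S0 = {}}. G (\<Prod>D))
      = (\<Sum>D\<in>DS. G (\<Prod>D))"
  proof (rule sum.mono_neutral_right)
    show "finite {D. D \<subseteq> PP Q \<and> real (\<Prod>D) < R / real r \<and> D \<inter> S0 = {}}"
      by (rule finite_subset[of _ "Pow (PP Q)"]) (use PP_fin in auto)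
    show "DS \<subseteq> {D. D \<subseteq> PP Q \<and> real (\<Prod>D) < R / real r \<and> D \<inter> S0 = {}}"
      unfolding DS_def using APP by blast
    show "\<forall>D\<in>{D. D \<subseteq> PP Q \<and> real (\<Prod>D) < R / real r \<and> D \<inter> S0 = {}} - DS. G (\<Prod>D) = 0"
    proof
      fix D assume D: "D \<in> {D. D \<subseteq> PP Q \<and> real (\<Prod>D) < R / real r \<and> D \<inter> S0 = {}} - DS"
      hence DPP: "D \<subseteq> PP Q" and "\<not> D \<subseteq> A" unfolding DS_def by blast+
      then obtain p where p: "p \<in> D" "p \<in> Rr" unfolding A_def by blast
      have "\<not> squarefree (\<Prod>D * \<Prod>Rr)"
        using not_sqf_prod[OF p PP_sub(1)[OF DPP] fRr] pRr p by blast
      thus "G (\<Prod>D) = 0" unfolding G_def rR by (simp add: lam_nsqf)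
    qed
  qed
  define X where "X = (\<lambda>D. \<Sum>T\<in>{T. T \<subseteq> PP Q \<and> real (\<Prod>T) < R / real (\<Prod>(D \<union> Rr)) \<and> T \<inter> (D \<union> Rr) = {}}.
        (\<Prod>p\<in>T. b1 p) * (ln (R / (real (\<Prod>T) * real (\<Prod>(D \<union> Rr))))) ^ l)"
  have mu_r: "real_of_int (moebius r) * f1dag H r = (-1) ^ card Rr * (\<Prod>p\<in>Rr. d1p p)"
    using moebius_prod_primes[OF fRr pRr] f1dag_prod[OF fRr pRr] unfolding rR by simp
  have step4: "real_of_int (moebius r) * f1dag H r * G (\<Prod>D)
      = sing H / fact l * (\<Prod>p\<in>Rr. 1 + g p) * ((\<Prod>p\<in>D. hh p) * X D)" if D: "D \<in> DS" for D
  proof -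
    have DA: "D \<subseteq> A" and DR: "real (\<Prod>D) < R / real r" and DS0: "D \<inter> S0 = {}"
      using D unfolding DS_def by blast+
    have fD: "finite D" and pD: "\<forall>p\<in>D. prime p" using PP_sub[of D Q] DA APP by blast+
    have dis: "D \<inter> Rr = {}" using DA unfolding A_def by blast
    have EPP: "D \<union> Rr \<subseteq> PP Q" using DA APP RrPP by blast
    have pE: "\<Prod>(D \<union> Rr) = \<Prod>D * r" using prod.union_disjoint[OF fD fRr dis, of "\<lambda>x. x"] rR by simp
    have ER: "real (\<Prod>(D \<union> Rr)) < R" unfolding pE using DR rpos by (simp add: pos_less_divide_eq)
    have lamv: "lam H R l (\<Prod>(D \<union> Rr)) = (-1) ^ card (D \<union> Rr) * (\<Prod>p\<in>D \<union> Rr. a1 p) * sing H / fact l * X D"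
      unfolding X_def by (rule lamE[OF Q EPP ER])
    have fdv: "fdag H (\<Prod>(D \<union> Rr)) = (\<Prod>p\<in>D \<union> Rr. fdp p)"
      using fdag_prod[of "D \<union> Rr"] fD fRr pD pRr by blast
    have cardE: "card (D \<union> Rr) = card D + card Rr" using card_Un_disjoint[OF fD fRr dis] .
    have pa: "(\<Prod>p\<in>D \<union> Rr. a1 p) = (\<Prod>p\<in>D. a1 p) * (\<Prod>p\<in>Rr. a1 p)" using prod.union_disjoint[OF fD fRr dis] .
    have pf: "(\<Prod>p\<in>D \<union> Rr. fdp p) = (\<Prod>p\<in>D. fdp p) * (\<Prod>p\<in>Rr. fdp p)" using prod.union_disjoint[OF fD fRr dis] .
    have G: "G (\<Prod>D) = ((-1) ^ card D * (-1) ^ card Rr) * ((\<Prod>p\<in>D. a1 p) * (\<Prod>p\<in>Rr. a1 p)) * sing H / fact l * X D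
        / ((\<Prod>p\<in>D. fdp p) * (\<Prod>p\<in>Rr. fdp p))"
      unfolding G_def pE[symmetric] lamv fdv cardE pa pf power_add by simp
    have m: "((-1::real) ^ card Rr) * (-1) ^ card Rr = 1" by (simp add: power_add[symmetric])
    have "real_of_int (moebius r) * f1dag H r * G (\<Prod>D)
      = sing H / fact l * ((\<Prod>p\<in>Rr. d1p p) * (\<Prod>p\<in>Rr. a1 p) / (\<Prod>p\<in>Rr. fdp p))
          * ((-1) ^ card D * ((\<Prod>p\<in>D. a1 p) / (\<Prod>p\<in>D. fdp p))) * X D"
      unfolding mu_r G by (rule alg[OF m])
    also have "(\<Prod>p\<in>Rr. d1p p) * (\<Prod>p\<in>Rr. a1 p) / (\<Prod>p\<in>Rr. fdp p) = (\<Prod>p\<in>Rr. 1 + g p)"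
    proof -
      have "(\<Prod>p\<in>Rr. d1p p) * (\<Prod>p\<in>Rr. a1 p) / (\<Prod>p\<in>Rr. fdp p) = (\<Prod>p\<in>Rr. d1p p * a1 p / fdp p)"
        by (simp add: prod.distrib prod_dividef)
      also have "\<dots> = (\<Prod>p\<in>Rr. 1 + g p)"
      proof (rule prod.cong[OF refl])
        fix p assume "p \<in> Rr"
        thus "d1p p * a1 p / fdp p = 1 + g p" using I1 pRr RrS0 by blast
      qed
      finally show ?thesis .
    qed
    also have "(-1) ^ card D * ((\<Prod>p\<in>D. a1 p) / (\<Prod>p\<in>D. fdp p)) = (\<Prod>p\<in>D. hh p)"
    proof -
      have "(\<Prod>p\<in>D. hh p) = (\<Prod>p\<in>D. - (a1 p / fdp p))"
        using DS0 unfolding hh_def by (intro prod.cong) auto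
      also have "\<dots> = (-1) ^ card D * (\<Prod>p\<in>D. a1 p / fdp p)" by (rule prod_uminus)
      finally show ?thesis by (simp add: prod_dividef)
    qed
    finally show ?thesis by (simp add: mult_ac)
  qed
  have y4: "ydag H R l r = sing H / fact l * (\<Prod>p\<in>Rr. 1 + g p) * (\<Sum>D\<in>DS. (\<Prod>p\<in>D. hh p) * X D)"
    unfolding y1 y2 set3 y3 sum_distrib_left using step4 by (simp add: mult_ac)
  define Z where "Z = (\<lambda>D T. if real (\<Prod>(D \<union> T)) * real r < R then (\<Prod>p\<in>D. hh p) * (\<Prod>p\<in>T. b1 p) * (ln (R / (real (\<Prod>(D \<union> T)) * real r))) ^ l else 0)"
  have s7a: "(\<Prod>p\<in>D. hh p) * X D = (\<Sum>T\<in>Pow (A - D). Z D T)" if D: "D \<in> DS" for D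
  proof -
    have DA: "D \<subseteq> A" using D unfolding DS_def by blast
    have fD: "finite D" and pD: "\<forall>p\<in>D. prime p" using PP_sub[of D Q] DA APP by blast+
    have dis: "D \<inter> Rr = {}" using DA unfolding A_def by blast
    have pE: "\<Prod>(D \<union> Rr) = \<Prod>D * r" using prod.union_disjoint[OF fD fRr dis, of "\<lambda>x. x"] rR by simp
    have Dpos: "\<Prod>D > 0" using pD fD by (intro prod_pos) (auto simp: prime_gt_0_nat)
    have DU: "\<Prod>(D \<union> T) = \<Prod>D * \<Prod>T" if "T \<in> Pow (A - D)" for T
    proof -
      have "finite T" using that fA finite_subset by blast
      moreover have "D \<inter> T = {}" using that by blast
      ultimately show ?thesis using prod.union_disjoint[OF fD, of T "\<lambda>x. x"] by simp
    qed
    have TSeq: "{T. T \<subseteq> PP Q \<and> real (\<Prod>T) < R / real (\<Prod>(D \<union> Rr)) \<and> T \<inter> (D \<union> Rr) = {}}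
        = {T \<in> Pow (A - D). real (\<Prod>(D \<union> T)) * real r < R}"
    proof (intro set_eqI iffI)
      fix T assume T: "T \<in> {T. T \<subseteq> PP Q \<and> real (\<Prod>T) < R / real (\<Prod>(D \<union> Rr)) \<and> T \<inter> (D \<union> Rr) = {}}"
      hence TA: "T \<in> Pow (A - D)" unfolding A_def by blast
      have "real (\<Prod>T) < R / (real (\<Prod>D) * real r)" using T unfolding pE by simp
      hence "real (\<Prod>T) * (real (\<Prod>D) * real r) < R" using Dpos rpos by (simp add: pos_less_divide_eq)
      hence "real (\<Prod>(D \<union> T)) * real r < R" unfolding DU[OF TA] by (simp add: mult_ac)
      thus "T \<in> {T \<in> Pow (A - D). real (\<Prod>(D \<union> T)) * real r < R}" using TA by blast
    next
      fix T assume T: "T \<in> {T \<in> Pow (A - D). real (\<Prod>(D \<union> T)) * real r < R}"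
      hence TA: "T \<in> Pow (A - D)" and c: "real (\<Prod>(D \<union> T)) * real r < R" by blast+
      have "real (\<Prod>T) * (real (\<Prod>D) * real r) < R" using c unfolding DU[OF TA] by (simp add: mult_ac)
      hence "real (\<Prod>T) < R / real (\<Prod>(D \<union> Rr))" unfolding pE using Dpos rpos by (simp add: pos_less_divide_eq)
      moreover have "T \<subseteq> PP Q" "T \<inter> (D \<union> Rr) = {}" using TA unfolding A_def by blast+
      ultimately show "T \<in> {T. T \<subseteq> PP Q \<and> real (\<Prod>T) < R / real (\<Prod>(D \<union> Rr)) \<and> T \<inter> (D \<union> Rr) = {}}" by blast
    qed
    have "X D = (\<Sum>T\<in>{T \<in> Pow (A - D). real (\<Prod>(D \<union> T)) * real r < R}.
        (\<Prod>p\<in>T. b1 p) * (ln (R / (real (\<Prod>(D \<union> T)) * real r))) ^ l)"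
      unfolding X_def TSeq
    proof (rule sum.cong[OF refl])
      fix T assume "T \<in> {T \<in> Pow (A - D). real (\<Prod>(D \<union> T)) * real r < R}"
      hence TA: "T \<in> Pow (A - D)" by blast
      have "real (\<Prod>T) * real (\<Prod>(D \<union> Rr)) = real (\<Prod>(D \<union> T)) * real r"
        unfolding pE DU[OF TA] by (simp add: mult_ac)
      thus "(\<Prod>p\<in>T. b1 p) * (ln (R / (real (\<Prod>T) * real (\<Prod>(D \<union> Rr))))) ^ l
          = (\<Prod>p\<in>T. b1 p) * (ln (R / (real (\<Prod>(D \<union> T)) * real r))) ^ l" by simp
    qed
    also have "\<dots> = (\<Sum>T\<in>Pow (A - D). if real (\<Prod>(D \<union> T)) * real r < R then
        (\<Prod>p\<in>T. b1 p) * (ln (R / (real (\<Prod>(D \<union> T)) * real r))) ^ l else 0)"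
      by (rule sum.inter_filter) (use fA in simp)
    finally have XD: "X D = (\<Sum>T\<in>Pow (A - D). if real (\<Prod>(D \<union> T)) * real r < R then
        (\<Prod>p\<in>T. b1 p) * (ln (R / (real (\<Prod>(D \<union> T)) * real r))) ^ l else 0)" .
    show ?thesis unfolding Z_def XD sum_distrib_left by (intro sum.cong refl) (simp add: mult_ac)
  qed
  have s7b: "(\<Sum>T\<in>Pow (A - D). Z D T) = 0" if D: "D \<in> Pow A - DS" for D
  proof -
    have DA: "D \<subseteq> A" and nD: "\<not> (real (\<Prod>D) < R / real r \<and> D \<inter> S0 = {})"
      using D unfolding DS_def by blast+
    have fD: "finite D" and pD: "\<forall>p\<in>D. prime p" using PP_sub[of D Q] DA APP by blast+
    show ?thesis
    proof (cases "D \<inter> S0 = {}")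
      case False
      then obtain p where "p \<in> D" "p \<in> S0" by blast
      hence h0: "(\<Prod>p\<in>D. hh p) = 0" using fD unfolding hh_def by (intro prod_zero) auto
      show ?thesis unfolding Z_def by (rule sum.neutral) (simp add: h0)
    next
      case True
      hence big: "R / real r \<le> real (\<Prod>D)" using nD by linarith
      hence big': "R \<le> real (\<Prod>D) * real r" using rpos by (simp add: pos_divide_le_eq)
      show ?thesis
      proof (rule sum.neutral, rule ballI)
        fix T assume TA: "T \<in> Pow (A - D)"
        have fT: "finite T" and pT: "\<forall>p\<in>T. prime p" using PP_sub[of T Q] TA APP by blast+
        have "\<Prod>T > 0" using pT fT by (intro prod_pos) (auto simp: prime_gt_0_nat)
        moreover have "\<Prod>(D \<union> T) = \<Prod>D * \<Prod>T"
          using prod.union_disjoint[OF fD fT, of "\<lambda>x. x"] TA by blast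
        ultimately have "real (\<Prod>(D \<union> T)) \<ge> real (\<Prod>D)"
        proof -
          assume a: "\<Prod>T > 0" "\<Prod>(D \<union> T) = \<Prod>D * \<Prod>T"
          have t1: "real (\<Prod>T) \<ge> 1" using a(1) by simp
          have "real (\<Prod>D) * 1 \<le> real (\<Prod>D) * real (\<Prod>T)" by (rule mult_left_mono[OF t1]) simp
          thus ?thesis unfolding a(2) by simp
        qed
        hence "real (\<Prod>(D \<union> T)) * real r \<ge> real (\<Prod>D) * real r" using rpos by (simp add: mult_right_mono)
        thus "Z D T = 0" unfolding Z_def using big' by simp
      qed
    qed
  qed
  have y5: "(\<Sum>D\<in>DS. (\<Prod>p\<in>D. hh p) * X D) = (\<Sum>D\<in>Pow A. \<Sum>T\<in>Pow (A - D). Z D T)"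
  proof -
    have "(\<Sum>D\<in>DS. (\<Prod>p\<in>D. hh p) * X D) = (\<Sum>D\<in>DS. \<Sum>T\<in>Pow (A - D). Z D T)"
      using s7a by (rule sum.cong[OF refl])
    also have "\<dots> = (\<Sum>D\<in>Pow A. \<Sum>T\<in>Pow (A - D). Z D T)"
    proof (rule sum.mono_neutral_left)
      show "finite (Pow A)" using fA by simp
      show "DS \<subseteq> Pow A" unfolding DS_def by blast
    qed (use s7b in blast)
    finally show ?thesis .
  qed
  have y6: "(\<Sum>D\<in>Pow A. \<Sum>T\<in>Pow (A - D). Z D T) = (\<Sum>M\<in>Pow A. \<Sum>D\<in>Pow M. Z D (M - D))"
    by (rule pow_double_sum[OF fA])
  have y7: "(\<Sum>D\<in>Pow M. Z D (M - D)) = (\<Prod>p\<in>M. g p) *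
      (if real (\<Prod>M) * real r < R then (ln (R / (real (\<Prod>M) * real r))) ^ l else 0)" if M: "M \<in> Pow A" for M
  proof -
    have fM: "finite M" using M fA finite_subset by blast
    have pM: "\<forall>p\<in>M. prime p" using PP_sub[of M Q] M APP by blast
    have U: "D \<union> (M - D) = M" if "D \<in> Pow M" for D using that by blast
    have "(\<Sum>D\<in>Pow M. Z D (M - D)) = (\<Sum>D\<in>Pow M. if real (\<Prod>M) * real r < R then
        (\<Prod>p\<in>D. hh p) * (\<Prod>p\<in>M - D. b1 p) * (ln (R / (real (\<Prod>M) * real r))) ^ l else 0)"
      unfolding Z_def by (rule sum.cong[OF refl]) (simp only: U)
    also have "\<dots> = (if real (\<Prod>M) * real r < R then
        (\<Sum>D\<in>Pow M. (\<Prod>p\<in>D. hh p) * (\<Prod>p\<in>M - D. b1 p)) * (ln (R / (real (\<Prod>M) * real r))) ^ l else 0)"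
      by (simp add: sum_distrib_right)
    also have "(\<Sum>D\<in>Pow M. (\<Prod>p\<in>D. hh p) * (\<Prod>p\<in>M - D. b1 p)) = (\<Prod>p\<in>M. hh p + b1 p)"
      by (rule prod_add[OF fM, symmetric])
    also have "\<dots> = (\<Prod>p\<in>M. g p)" using I2 pM by (intro prod.cong) auto
    finally show ?thesis by simp
  qed
  have "ydag H R l r = sing H / fact l * (\<Prod>p\<in>Rr. 1 + g p) *
    (\<Sum>M\<in>Pow A. (\<Prod>p\<in>M. g p) *
        (if real (\<Prod>M) * real r < R then (ln (R / (real (\<Prod>M) * real r))) ^ l else 0))"
    unfolding y4 y5 y6 using y7 by (intro arg_cong[where f="\<lambda>x. sing H / fact l * (\<Prod>p\<in>Rr. 1 + g p) * x"] sum.cong refl) blast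
  thus ?thesis unfolding Rr_def A_def .
qed

end


lemma pow_upper:
  fixes t :: real assumes "0 \<le> t" "t \<le> 1"
  shows "(1 - t) ^ m \<le> 1 - real m * t + (real m)^2 * t^2"
proof (induction m)
  case 0 thus ?case by simp
next
  case (Suc m)
  have "(1 - t) ^ Suc m = (1 - t) * (1 - t) ^ m" by simp
  also have "\<dots> \<le> (1 - t) * (1 - real m * t + (real m)^2 * t^2)"
    using Suc assms by (intro mult_left_mono) auto
  also have "\<dots> \<le> 1 - real (Suc m) * t + (real (Suc m))^2 * t^2"
  proof -
    have "(1 - real (Suc m) * t + (real (Suc m))^2 * t^2) - (1 - t) * (1 - real m * t + (real m)^2 * t^2)
        = (real m + 1) * t^2 + (real m)^2 * t^3"
      by (simp add: algebra_simps power2_eq_square power3_eq_cube)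
    moreover have "(real m + 1) * t^2 + (real m)^2 * t^3 \<ge> 0" using assms by simp
    ultimately show ?thesis by linarith
  qed
  finally show ?case .
qed

lemma qb:
  fixes t :: real
  assumes t: "0 \<le> t" "2 * real m * t \<le> 1" and t1: "t \<le> 1"
  shows "\<bar>(1 - real m * t) / (1 - t) ^ m - 1\<bar> \<le> 2 * (real m)^2 * t^2"
proof -
  have lo: "1 - real m * t \<le> (1 - t) ^ m"
    using Bernoulli_inequality[of "-t" m] t1 by simp
  have half: "1 - real m * t \<ge> 1/2" using t by linarith
  have up: "(1 - t) ^ m \<le> 1 - real m * t + (real m)^2 * t^2" by (rule pow_upper[OF t(1) t1])
  define u where "u = (1 - t) ^ m"
  have upos: "u \<ge> 1/2" unfolding u_def using lo half by linarith
  have "(1 - real m * t) / u - 1 = ((1 - real m * t) - u) / u" using upos by (simp add: field_simps)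
  hence "\<bar>(1 - real m * t) / u - 1\<bar> = (u - (1 - real m * t)) / u"
    using lo upos unfolding u_def by (simp add: abs_div)
  also have "\<dots> \<le> ((real m)^2 * t^2) / u" using up upos unfolding u_def by (intro divide_right_mono) auto
  also have "\<dots> \<le> ((real m)^2 * t^2) / (1/2)" using upos by (intro divide_left_mono) auto
  finally show ?thesis unfolding u_def by simp
qed

definition sfac :: "int set \<Rightarrow> nat \<Rightarrow> real" where
  "sfac K p = (if prime p then (1 - real (nu p K) / real p) / (1 - 1 / real p) ^ card K else 1)"

lemma sing_sfac: "sing K = prodinf (sfac K)"
  unfolding sing_def sfac_def ..

lemma sfac_pos: assumes "admissible K" shows "sfac K p > 0"
proof (cases "prime p")
  case True
  have "nu p K < p" using assms True unfolding admissible_def by blast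
  hence a: "real (nu p K) / real p < 1" using True prime_gt_0_nat[OF True] by (simp add: divide_less_eq)
  have "1 / real p < 1" using prime_ge_2_nat[OF True] by (simp add: divide_less_eq)
  hence "(1 - 1 / real p) ^ card K > 0" by simp
  thus ?thesis using a True unfolding sfac_def by simp
qed (simp add: sfac_def)

lemma sing_conv:
  assumes "finite K" "admissible K"
  shows "convergent_prod (sfac K)"
proof -
  define m where "m = card K"
  define N where "N = nat \<lceil>max (2 * (\<Sum>h\<in>K. \<bar>real_of_int h\<bar>)) (2 * real m)\<rceil> + 1"
  have sg: "summable (\<lambda>n. 2 * (real m)^2 * inverse (real n ^ 2))"
    by (intro summable_mult inverse_power_summable) simp
  have "summable (\<lambda>n. norm (sfac K n - 1))"
  proof (rule summable_comparison_test'[OF sg])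
    fix n assume n: "n \<ge> N"
    show "norm (norm (sfac K n - 1)) \<le> 2 * (real m)^2 * inverse (real n ^ 2)"
    proof (cases "prime n")
      case False thus ?thesis by (simp add: sfac_def)
    next
      case True
      have nb: "real n > max (2 * (\<Sum>h\<in>K. \<bar>real_of_int h\<bar>)) (2 * real m)"
        using n unfolding N_def by linarith
      have num: "nu n K = m" unfolding m_def using nu_inj[OF assms(1) True] nb by simp
      have npos: "real n > 0" using prime_gt_0_nat[OF True] by simp
      have t0: "0 \<le> 1 / real n" using npos by simp
      have t2: "2 * real m * (1 / real n) \<le> 1" using nb npos by (simp add: divide_le_eq)
      have t1: "1 / real n \<le> 1" using prime_ge_2_nat[OF True] by (simp add: divide_le_eq)
      have "\<bar>(1 - real m * (1 / real n)) / (1 - 1 / real n) ^ m - 1\<bar> \<le> 2 * (real m)^2 * (1 / real n)^2"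
        by (rule qb[OF t0 t2 t1])
      thus ?thesis unfolding sfac_def using True num m_def by (simp add: power_one_over inverse_eq_divide)
    qed
  qed
  hence "abs_convergent_prod (sfac K)" by (rule summable_imp_abs_convergent_prod)
  thus ?thesis by (rule abs_convergent_prod_imp_convergent_prod)
qed

lemma sing_lim:
  assumes "finite K" "admissible K"
  shows "(\<lambda>n. \<Prod>i\<le>n. sfac K i) \<longlonglongrightarrow> sing K" "sing K > 0"
proof -
  show l: "(\<lambda>n. \<Prod>i\<le>n. sfac K i) \<longlonglongrightarrow> sing K"
    unfolding sing_sfac by (rule convergent_prod_LIMSEQ[OF sing_conv[OF assms]])
  have nz: "sing K \<noteq> 0" unfolding sing_sfac
    using prodinf_nonzero[OF sing_conv[OF assms]] sfac_pos[OF assms(2)] by (metis less_irrefl)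
  have "sing K \<ge> 0"
  proof (rule LIMSEQ_le_const[OF l], intro exI allI impI)
    fix n :: nat
    show "0 \<le> (\<Prod>i\<le>n. sfac K i)" using sfac_pos[OF assms(2)] by (intro prod_nonneg) (simp add: less_imp_le)
  qed
  thus "sing K > 0" using nz by linarith
qed


definition wk :: "nat \<Rightarrow> nat \<Rightarrow> real" where
  "wk k n = (if n \<ge> 2 then real k * (1 + ln (real n)) / (max 2 (real n - real k) * (real n - 1)) else 0)"

lemma wk_nonneg: "wk k n \<ge> 0"
proof (cases "n \<ge> 2")
  case True
  have "ln (real n) \<ge> 0" using True by simp
  moreover have "max 2 (real n - real k) * (real n - 1) > 0" using True by (intro mult_pos_pos) auto
  ultimately show ?thesis unfolding wk_def using True by simp
qed (simp add: wk_def)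

lemma ln_le_sqrt: fixes x :: real assumes "x \<ge> 1" shows "1 + ln x \<le> 3 * sqrt x"
proof -
  have s1: "sqrt x \<ge> 1" using assms by simp
  have "ln (sqrt x) \<le> sqrt x - 1" using s1 by (intro ln_le_minus_one) simp
  moreover have "ln (sqrt x) = ln x / 2" using assms by (simp add: ln_sqrt)
  ultimately show ?thesis using s1 by linarith
qed

lemma wk_summable: "summable (wk k)"
proof -
  have sg: "summable (\<lambda>n. 12 * real k * real n powr (-3/2))"
    by (intro summable_mult) (simp add: summable_real_powr_iff)
  show ?thesis
  proof (rule summable_comparison_test'[OF sg])
    fix n :: nat assume n: "n \<ge> 2 * k + 2"
    have n2: "n \<ge> 2" using n by simp
    have rn: "real n \<ge> 2" using n2 by simp
    have m: "max 2 (real n - real k) \<ge> real n / 2" using n by simp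
    have m1: "real n - 1 \<ge> real n / 2" using rn by simp
    have den: "max 2 (real n - real k) * (real n - 1) \<ge> (real n / 2) * (real n / 2)"
      using m m1 rn by (intro mult_mono) auto
    have dpos: "(real n / 2) * (real n / 2) > 0" using rn by simp
    have num: "real k * (1 + ln (real n)) \<le> real k * (3 * sqrt (real n))"
      using ln_le_sqrt[of "real n"] rn by (intro mult_left_mono) auto
    have num0: "0 \<le> real k * (1 + ln (real n))" using rn by simp
    have "wk k n = real k * (1 + ln (real n)) / (max 2 (real n - real k) * (real n - 1))"
      unfolding wk_def using n2 by simp
    also have "\<dots> \<le> real k * (1 + ln (real n)) / ((real n / 2) * (real n / 2))"
      using den dpos num0 by (intro divide_left_mono) auto
    also have "\<dots> \<le> real k * (3 * sqrt (real n)) / ((real n / 2) * (real n / 2))"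
      using num dpos by (intro divide_right_mono) auto
    also have "\<dots> = 12 * real k * (sqrt (real n) / (real n)^2)"
      by (simp add: power2_eq_square field_simps)
    also have "sqrt (real n) / (real n)^2 = real n powr (-3/2)"
    proof -
      have "real n powr (-3/2) = real n powr (1/2 - 2)" by simp
      also have "\<dots> = real n powr (1/2) / real n powr 2" by (rule powr_diff)
      also have "\<dots> = sqrt (real n) / (real n)^2" using rn by (simp add: powr_half_sqrt)
      finally show ?thesis by simp
    qed
    finally have "wk k n \<le> 12 * real k * real n powr (-3/2)" .
    thus "norm (wk k n) \<le> 12 * real k * real n powr (-3/2)" using wk_nonneg[of k n] by simp
  qed
qed

lemma wk_sum_le: "finite F \<Longrightarrow> (\<Sum>n\<in>F. wk k n) \<le> suminf (wk k)"
  by (rule sum_le_suminf[OF wk_summable]) (auto intro: wk_nonneg)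


context hset begin

definition "K = real (card H)"

lemma facts2:
  assumes "prime p"
  shows "nv p \<le> K" "nv0 p \<le> real p - 1" "K \<ge> 2" "nv0 p \<le> K + 1"
proof -
  show "nv p \<le> K" unfolding nv_def K_def using nu_le_k[of p] by simp
  have "nu p H0 \<le> p - 1" using nu0_lt[OF assms] by simp
  thus "nv0 p \<le> real p - 1" unfolding nv0_def using prime_gt_0_nat[OF assms] by (simp add: of_nat_diff)
  show "K \<ge> 2" unfolding K_def using cardH by simp
  show "nv0 p \<le> K + 1" unfolding nv0_def K_def using nu0_le[of p] by simp
qed

definition "tb p = (if prime p then (real (card H0) - real (nu p H0)) * ln (real p) / real p else 0)"

lemma tb_nonneg: "tb p \<ge> 0"
proof (cases "prime p")
  case True
  have "real (nu p H0) \<le> real (card H0)" using nu_le_card[OF finH0, of p] by simp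
  moreover have "ln (real p) \<ge> 0" using prime_gt_0_nat[OF True] by simp
  ultimately show ?thesis unfolding tb_def using True by simp
qed (simp add: tb_def)

lemma tb_summable: "summable tb"
proof (rule summable_finite[of "{..nat \<lceil>Dbd\<rceil>}"])
  fix n assume n: "n \<notin> {..nat \<lceil>Dbd\<rceil>}"
  hence "real n > Dbd" by (simp add: not_le) linarith
  thus "tb n = 0" unfolding tb_def using nu0_big[of n] cardH0 by auto
qed simp

lemma beta_eq: "beta H0 = suminf tb"
  unfolding beta_def tb_def ..

lemma tb_sum_le: "finite F \<Longrightarrow> (\<Sum>p\<in>F. tb p) \<le> beta H0"
  unfolding beta_eq by (rule sum_le_suminf[OF tb_summable]) (auto intro: tb_nonneg)

lemma beta_low: "beta H0 \<ge> ln 2"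
proof -
  have "tb 2 \<le> beta H0" using tb_sum_le[of "{2}"] by simp
  moreover have "tb 2 \<ge> ln 2"
  proof -
    have "nu 2 H0 < 2" using nu0_lt[of 2] by simp
    hence "real (card H0) - real (nu 2 H0) \<ge> 2" using cardH0 cardH by simp
    hence "(real (card H0) - real (nu 2 H0)) * ln 2 \<ge> 2 * ln 2" by (intro mult_right_mono) auto
    thus ?thesis unfolding tb_def by simp
  qed
  ultimately show ?thesis by linarith
qed

lemma g_coll: "nv0 p = nv p \<Longrightarrow> g p = 1 / (real p - 1)" by (simp add: g_alt)
lemma g_ncoll: "nv0 p \<noteq> nv p \<Longrightarrow> g p = - (nv p / ((real p - nv p) * (real p - 1)))" by (simp add: g_alt)

lemma B1:
  assumes "prime p"
  shows "\<bar>g p\<bar> * ln (real p) \<le> 2 * K * tb p + wk (card H) p"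
proof -
  note f = prime_facts[OF assms] facts2[OF assms]
  define x where "x = real p"
  define v where "v = nv p"
  define v0 where "v0 = nv0 p"
  have x2: "x \<ge> 2" using f unfolding x_def by simp
  have lnx: "ln x \<ge> 0" using x2 by simp
  have w0: "wk (card H) p \<ge> 0" by (rule wk_nonneg)
  have tb0: "tb p \<ge> 0" by (rule tb_nonneg)
  have tbv: "tb p = (K + 1 - v0) * ln x / x"
    unfolding tb_def K_def v0_def nv0_def x_def using assms cardH0 by simp
  show ?thesis
  proof (cases "v0 \<le> K")
    case True
    have tbl: "ln x / x \<le> tb p"
    proof -
      have "1 * (ln x / x) \<le> (K + 1 - v0) * (ln x / x)" using True lnx x2 by (intro mult_right_mono) auto
      thus ?thesis unfolding tbv by simp
    qed
    have gb: "\<bar>g p\<bar> \<le> 2 * K / x"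
    proof (cases "v0 = v")
      case True
      have "\<bar>g p\<bar> = 1 / (x - 1)" using g_coll[of p] True x2 unfolding v0_def v_def x_def by simp
      also have "\<dots> \<le> 2 / x" using x2 by (simp add: divide_simps)
      also have "\<dots> \<le> 2 * K / x" using f x2 by (intro divide_right_mono) auto
      finally show ?thesis .
    next
      case False
      have e: "v0 = v + 1" using f(4) False unfolding v0_def v_def by simp
      have xv: "x - v \<ge> 1" using f(8) e unfolding v0_def x_def by linarith
      have v1: "v \<ge> 1" using f unfolding v_def by simp
      have "\<bar>g p\<bar> = v / ((x - v) * (x - 1))" using g_ncoll[of p] False xv x2 v1
        unfolding v0_def v_def x_def by (simp add: abs_div abs_mult)
      also have "\<dots> \<le> v / (1 * (x - 1))" using xv x2 v1 by (intro divide_left_mono mult_right_mono) auto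
      also have "\<dots> \<le> K / (x - 1)" using f(7) x2 unfolding v_def by (simp add: divide_right_mono)
      also have "\<dots> \<le> 2 * K / x" using f x2 by (simp add: divide_simps)
      finally show ?thesis .
    qed
    have "\<bar>g p\<bar> * ln x \<le> (2 * K / x) * ln x" using gb lnx by (rule mult_right_mono)
    also have "\<dots> = 2 * K * (ln x / x)" by simp
    also have "\<dots> \<le> 2 * K * tb p" using tbl f by (intro mult_left_mono) auto
    finally show ?thesis using w0 unfolding x_def by linarith
  next
    case False
    have n1: "\<not> nu p H0 \<le> card H" using False unfolding v0_def nv0_def K_def by simp
    have "nu p H0 = card H + 1" using n1 nu0_le[of p] by linarith
    hence e0: "v0 = K + 1" unfolding v0_def nv0_def K_def by simp
    have ev: "v = K" using e0 f(4) f(7) unfolding v0_def v_def by linarith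
    have nc: "v0 \<noteq> v" using e0 ev by simp
    have xK: "x - K \<ge> 2" using f(8) e0 unfolding v0_def x_def by linarith
    have "\<bar>g p\<bar> = K / ((x - K) * (x - 1))" using g_ncoll[of p] nc xK x2 f(9) ev
      unfolding v0_def v_def x_def by (simp add: abs_div abs_mult)
    hence "\<bar>g p\<bar> * ln x = K * ln x / ((x - K) * (x - 1))" by simp
    also have "\<dots> \<le> K * (1 + ln x) / ((x - K) * (x - 1))"
      using xK x2 f(9) by (intro divide_right_mono mult_left_mono) auto
    also have "\<dots> = wk (card H) p"
      unfolding wk_def K_def x_def using x2 xK unfolding x_def K_def by (simp add: max_def)
    finally show ?thesis using tb0 f(9) unfolding x_def by (smt (verit) mult_nonneg_nonneg)
  qed
qed

lemma B2:
  assumes "prime p"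
  shows "1 + g p > 0" "1 + \<bar>g p\<bar> \<le> (1 + 4 * wk (card H) p) * (1 + g p)"
proof -
  note f = prime_facts[OF assms] facts2[OF assms]
  define x where "x = real p"
  define v where "v = nv p"
  define v0 where "v0 = nv0 p"
  define w where "w = wk (card H) p"
  have x2: "x \<ge> 2" using f unfolding x_def by simp
  have w0: "w \<ge> 0" unfolding w_def by (rule wk_nonneg)
  have "1 + g p > 0 \<and> 1 + \<bar>g p\<bar> \<le> (1 + 4 * w) * (1 + g p)"
  proof (cases "v0 = v")
    case True
    have ge: "g p = 1 / (x - 1)" using g_coll[of p] True unfolding v0_def v_def x_def by simp
    have gp: "g p > 0" unfolding ge using x2 by simp
    have "1 * (1 + g p) \<le> (1 + 4 * w) * (1 + g p)" using w0 gp by (intro mult_right_mono) auto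
    thus ?thesis using gp by simp
  next
    case False
    have e: "v0 = v + 1" using f(4) False unfolding v0_def v_def by simp
    have xv: "x - v \<ge> 2" using f(8) e unfolding v0_def x_def v_def by linarith
    have v1: "v \<ge> 1" using f unfolding v_def by simp
    define a where "a = v / ((x - v) * (x - 1))"
    have ge: "g p = - a" using g_ncoll[of p] False unfolding a_def v0_def v_def x_def by simp
    have a0: "a \<ge> 0" unfolding a_def using xv x2 v1 by simp
    have ah: "a \<le> 1/2"
    proof -
      have "a \<le> v / (2 * (x - 1))" unfolding a_def using xv x2 v1 by (intro divide_left_mono mult_right_mono) auto
      also have "\<dots> \<le> 1/2" using xv x2 by (simp add: divide_simps)
      finally show ?thesis .
    qed
    have aw: "a \<le> w"
    proof -
      have K0: "K \<ge> 0" using f by simp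
      have dw: "max 2 (x - K) * (x - 1) \<le> (x - v) * (x - 1)"
        using xv x2 f(7) unfolding v_def by (intro mult_right_mono) auto
      have dw0: "max 2 (x - K) * (x - 1) > 0" using x2 by (intro mult_pos_pos) auto
      have "a \<le> K * (1 + ln x) / ((x - v) * (x - 1))"
      proof -
        have "v \<le> K * (1 + ln x)" using f(7) K0 x2 unfolding v_def
          by (smt (verit) ln_ge_zero mult_left_mono mult_cancel_left1)
        thus ?thesis unfolding a_def using xv x2 by (intro divide_right_mono) auto
      qed
      also have "\<dots> \<le> K * (1 + ln x) / (max 2 (x - K) * (x - 1))"
        using dw dw0 K0 x2 by (intro divide_left_mono mult_nonneg_nonneg) auto
      also have "\<dots> = w" unfolding w_def wk_def K_def x_def using x2 unfolding x_def by simp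
      finally show ?thesis .
    qed
    have "1 + \<bar>g p\<bar> = 1 + a" using ge a0 by simp
    also have "\<dots> \<le> (1 + 4 * a) * (1 - a)"
    proof -
      have "(1 + 4 * a) * (1 - a) - (1 + a) = a * (2 - 4 * a)" by (simp add: algebra_simps)
      moreover have "a * (2 - 4 * a) \<ge> 0" using a0 ah by simp
      ultimately show ?thesis by linarith
    qed
    also have "\<dots> \<le> (1 + 4 * w) * (1 - a)" using aw ah by (intro mult_right_mono) auto
    finally show ?thesis using ge ah by simp
  qed
  thus "1 + g p > 0" "1 + \<bar>g p\<bar> \<le> (1 + 4 * wk (card H) p) * (1 + g p)" unfolding w_def by auto
qed

lemma gform:
  assumes "prime p"
  shows "1 + g p = (real p - nv0 p) * real p / ((real p - nv p) * (real p - 1))"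
proof -
  note f = prime_facts[OF assms] facts2[OF assms]
  define x where "x = real p"
  define v where "v = nv p"
  have x2: "x \<ge> 2" using f unfolding x_def by simp
  have xv: "x - v > 0" using f unfolding x_def v_def by linarith
  show ?thesis
  proof (cases "nv0 p = nv p")
    case True
    have "1 + g p = x / (x - 1)" unfolding g_coll[OF True] x_def using x2 unfolding x_def by (simp add: divide_simps)
    also have "\<dots> = (x - v) * x / ((x - v) * (x - 1))" using xv by simp
    finally show ?thesis using True unfolding x_def v_def by simp
  next
    case False
    have e: "nv0 p = v + 1" using f(4) False unfolding v_def by simp
    have "1 + g p = ((x - v) * (x - 1) - v) / ((x - v) * (x - 1))"
      unfolding g_ncoll[OF False] x_def v_def using xv x2 unfolding x_def v_def by (simp add: divide_simps)
    also have "(x - v) * (x - 1) - v = (x - (v + 1)) * x" by (simp add: algebra_simps)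
    finally show ?thesis unfolding e x_def v_def .
  qed
qed

lemma sfac_rel: "sfac H0 p = sfac H p * (if prime p then 1 + g p else 1)"
proof (cases "prime p")
  case True
  note f = prime_facts[OF True]
  define x where "x = real p"
  have x2: "x \<ge> 2" using f unfolding x_def by simp
  define u where "u = 1 - 1 / x"
  have u0: "u > 0" unfolding u_def using x2 by (simp add: divide_simps)
  have xv: "x - nv p > 0" using f unfolding x_def by linarith
  have key: "(1 - nv p / x) * (1 + g p) = (1 - nv0 p / x) / u"
  proof -
    have "(1 - nv p / x) * (1 + g p) = ((x - nv p) / x) * ((x - nv0 p) * x / ((x - nv p) * (x - 1)))"
      unfolding gform[OF True] x_def[symmetric] using x2 by (simp add: divide_simps)
    also have "\<dots> = (x - nv0 p) / (x - 1)" using x2 xv by (simp add: divide_simps)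
    also have "\<dots> = (1 - nv0 p / x) / u" unfolding u_def using x2 by (simp add: divide_simps)
    finally show ?thesis .
  qed
  have "sfac H p * (1 + g p) = (1 - nv p / x) * (1 + g p) / u ^ card H"
    unfolding sfac_def u_def x_def nv_def using True by simp
  also have "\<dots> = (1 - nv0 p / x) / u ^ Suc (card H)" unfolding key using u0 by simp
  also have "\<dots> = sfac H0 p" unfolding sfac_def u_def x_def nv0_def using True cardH0 by simp
  finally show ?thesis using True by simp
qed (simp add: sfac_def)

end


context hset begin

definition "W = suminf (wk (card H))"
definition "Cst = (2 * K + W / ln 2) * exp (4 * W)"

lemma W_nonneg: "W \<ge> 0"
  unfolding W_def by (rule suminf_nonneg[OF wk_summable]) (rule wk_nonneg)

lemma Cst_nonneg: "Cst \<ge> 0"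
proof -
  have "K \<ge> 0" unfolding K_def by simp
  thus ?thesis unfolding Cst_def using W_nonneg by simp
qed

lemma sum_bound:
  assumes "finite A" "\<forall>p\<in>A. prime p"
  shows "(\<Sum>p\<in>A. \<bar>g p\<bar> * ln (real p)) \<le> (2 * K + W / ln 2) * beta H0"
proof -
  have "(\<Sum>p\<in>A. \<bar>g p\<bar> * ln (real p)) \<le> (\<Sum>p\<in>A. 2 * K * tb p + wk (card H) p)"
    using B1 assms(2) by (intro sum_mono) auto
  also have "\<dots> = 2 * K * (\<Sum>p\<in>A. tb p) + (\<Sum>p\<in>A. wk (card H) p)"
    by (simp add: sum.distrib sum_distrib_left)
  also have "\<dots> \<le> 2 * K * beta H0 + W"
  proof (rule add_mono)
    show "2 * K * (\<Sum>p\<in>A. tb p) \<le> 2 * K * beta H0"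
      using tb_sum_le[OF assms(1)] by (intro mult_left_mono) (auto simp: K_def)
    show "(\<Sum>p\<in>A. wk (card H) p) \<le> W" unfolding W_def by (rule wk_sum_le[OF assms(1)])
  qed
  also have "W \<le> W / ln 2 * beta H0"
  proof -
    have "W / ln 2 * ln 2 \<le> W / ln 2 * beta H0"
      using beta_low W_nonneg by (intro mult_left_mono) auto
    thus ?thesis by simp
  qed
  finally show ?thesis by (simp add: algebra_simps)
qed

lemma prod_bound:
  assumes "finite A" "\<forall>p\<in>A. prime p"
  shows "(\<Prod>p\<in>A. 1 + \<bar>g p\<bar>) \<le> exp (4 * W) * (\<Prod>p\<in>A. 1 + g p)"
proof -
  have "(\<Prod>p\<in>A. 1 + \<bar>g p\<bar>) \<le> (\<Prod>p\<in>A. (1 + 4 * wk (card H) p) * (1 + g p))"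
    using B2 assms(2) by (intro prod_mono) (auto intro: add_nonneg_nonneg)
  also have "\<dots> = (\<Prod>p\<in>A. 1 + 4 * wk (card H) p) * (\<Prod>p\<in>A. 1 + g p)"
    by (rule prod.distrib)
  also have "(\<Prod>p\<in>A. 1 + 4 * wk (card H) p) \<le> exp (4 * W)"
  proof -
    have "(\<Prod>p\<in>A. 1 + 4 * wk (card H) p) \<le> (\<Prod>p\<in>A. exp (4 * wk (card H) p))"
      using wk_nonneg by (intro prod_mono) (auto intro: add_nonneg_nonneg)
    also have "\<dots> = exp (4 * (\<Sum>p\<in>A. wk (card H) p))"
      using exp_sum[OF assms(1), of "\<lambda>p. 4 * wk (card H) p"] by (simp add: sum_distrib_left)
    also have "\<dots> \<le> exp (4 * W)" unfolding W_def using wk_sum_le[OF assms(1)] by simp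
    finally show ?thesis .
  qed
  hence "(\<Prod>p\<in>A. 1 + 4 * wk (card H) p) * (\<Prod>p\<in>A. 1 + g p) \<le> exp (4 * W) * (\<Prod>p\<in>A. 1 + g p)"
    using B2(1) assms(2) by (intro mult_right_mono prod_nonneg) (auto intro: less_imp_le)
  finally show ?thesis .
qed

lemma Y_conv:
  assumes "finite M" "\<forall>p\<in>M. prime p" "real r > 0" "R > 0"
  shows "(if real (\<Prod>M) * real r < R then (ln (R / (real (\<Prod>M) * real r))) ^ l else 0)
     = (if (\<Sum>p\<in>M. ln (real p)) < ln (R / real r) then (ln (R / real r) - (\<Sum>p\<in>M. ln (real p))) ^ l else 0)"
proof -
  have Mpos: "real (\<Prod>M) > 0" using assms(1,2) by (simp add: prime_gt_0_nat prod_pos)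
  have lnM: "ln (real (\<Prod>M)) = (\<Sum>p\<in>M. ln (real p))"
    unfolding of_nat_prod using assms(1,2) by (subst ln_prod) (auto simp: prime_gt_0_nat)
  have e1: "ln (R / (real (\<Prod>M) * real r)) = ln (R / real r) - (\<Sum>p\<in>M. ln (real p))"
  proof -
    have "ln (R / (real (\<Prod>M) * real r)) = ln R - (ln (real (\<Prod>M)) + ln (real r))"
      using Mpos assms(3,4) by (simp add: ln_div ln_mult del: of_nat_prod)
    moreover have "ln (R / real r) = ln R - ln (real r)" using assms(3,4) by (simp add: ln_div)
    ultimately show ?thesis unfolding lnM by simp
  qed
  have e2: "real (\<Prod>M) * real r < R \<longleftrightarrow> (\<Sum>p\<in>M. ln (real p)) < ln (R / real r)"
  proof -
    have "real (\<Prod>M) * real r < R \<longleftrightarrow> ln (real (\<Prod>M) * real r) < ln R"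
      using Mpos assms(3,4) by simp
    also have "\<dots> \<longleftrightarrow> (\<Sum>p\<in>M. ln (real p)) < ln (R / real r)"
    proof -
      have "ln (real (\<Prod>M) * real r) = ln (real (\<Prod>M)) + ln (real r)" using Mpos assms(3) by (simp add: ln_mult del: of_nat_prod)
      moreover have "ln (R / real r) = ln R - ln (real r)" using assms(3,4) by (simp add: ln_div)
      ultimately show ?thesis unfolding lnM by linarith
    qed
    finally show ?thesis .
  qed
  show ?thesis unfolding e1 e2 ..
qed

lemma perQ:
  assumes l: "1 \<le> l" and Q: "R \<le> real Q" and r: "squarefree r" "0 < r" "real r < R" "coprime r (A0 H)"
  shows "\<bar>ydag H R l r - sing H * (\<Prod>p\<in>PP Q. 1 + g p) * (ln (R / real r)) ^ l / fact l\<bar>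
      \<le> sing H * (\<Prod>p\<in>PP Q. 1 + g p) * (real l / fact l) * Cst * beta H0 * (ln (R / real r)) ^ (l - 1)"
proof -
  define Rr where "Rr = prime_factors r"
  define A where "A = PP Q - Rr"
  define L where "L = ln (R / real r)"
  have rpos: "real r > 0" using r by simp
  have Rpos: "R > 0" using r by linarith
  have L0: "L \<ge> 0" unfolding L_def using r rpos by simp
  have fA: "finite A" unfolding A_def using PP_fin by simp
  have pA: "\<forall>p\<in>A. prime p" unfolding A_def PP_def by simp
  have lnA: "\<forall>p\<in>A. 0 \<le> ln (real p)"
  proof
    fix p assume "p \<in> A"
    hence "prime p" using pA by blast
    hence "real p \<ge> 1" using prime_ge_1_nat by simp
    thus "0 \<le> ln (real p)" by simp
  qed
  have RrPP: "Rr \<subseteq> PP Q"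
  proof
    fix p assume p: "p \<in> Rr"
    hence "prime p" "p dvd r" unfolding Rr_def by (auto simp: prime_factors_dvd)
    hence "p \<le> r" using r(2) by (simp add: dvd_imp_le)
    hence "real p \<le> real Q" using r(3) Q by linarith
    thus "p \<in> PP Q" using \<open>prime p\<close> unfolding PP_def by simp
  qed
  have fRr: "finite Rr" unfolding Rr_def by simp
  have pRr: "\<forall>p\<in>Rr. prime p" unfolding Rr_def by auto
  define P where "P = (\<Prod>p\<in>Rr. 1 + g p)"
  define Pi where "Pi = (\<Prod>p\<in>A. 1 + g p)"
  have P0: "P \<ge> 0" unfolding P_def using B2(1) pRr by (intro prod_nonneg) (auto intro: less_imp_le)
  have Pi0: "Pi \<ge> 0" unfolding Pi_def using B2(1) pA by (intro prod_nonneg) (auto intro: less_imp_le)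
  have admH: "admissible H" unfolding admissible_def using nu0_lt nu_le0 le_less_trans by blast
  have S0: "sing H > 0" using sing_lim(2)[OF finH admH] .
  have cQ: "(\<Prod>p\<in>PP Q. 1 + g p) = P * Pi"
  proof -
    have "PP Q = Rr \<union> A" unfolding A_def using RrPP by blast
    moreover have "Rr \<inter> A = {}" unfolding A_def by blast
    ultimately show ?thesis unfolding P_def Pi_def using prod.union_disjoint[OF fRr fA] by simp
  qed
  define Y where "Y = (\<Sum>M\<in>Pow A. (\<Prod>p\<in>M. g p) *
        (if (\<Sum>p\<in>M. ln (real p)) < L then (L - (\<Sum>p\<in>M. ln (real p))) ^ l else 0))"
  have yd: "ydag H R l r = sing H / fact l * P * Y"
  proof -
    have "ydag H R l r = sing H / fact l * P * (\<Sum>M\<in>Pow A. (\<Prod>p\<in>M. g p) *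
        (if real (\<Prod>M) * real r < R then (ln (R / (real (\<Prod>M) * real r))) ^ l else 0))"
      unfolding P_def A_def Rr_def by (rule ydag_expand[OF Q r])
    also have "(\<Sum>M\<in>Pow A. (\<Prod>p\<in>M. g p) *
        (if real (\<Prod>M) * real r < R then (ln (R / (real (\<Prod>M) * real r))) ^ l else 0)) = Y"
      unfolding Y_def L_def
    proof (rule sum.cong[OF refl])
      fix M assume M: "M \<in> Pow A"
      have fM: "finite M" using M fA finite_subset by blast
      have pM: "\<forall>p\<in>M. prime p" using M pA by blast
      show "(\<Prod>p\<in>M. g p) * (if real (\<Prod>M) * real r < R then (ln (R / (real (\<Prod>M) * real r))) ^ l else 0) =
         (\<Prod>p\<in>M. g p) * (if (\<Sum>p\<in>M. ln (real p)) < ln (R / real r) then (ln (R / real r) - (\<Sum>p\<in>M. ln (real p))) ^ l else 0)"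
        by (subst Y_conv[OF fM pM rpos Rpos]) (rule refl)
    qed
    finally show ?thesis .
  qed
  have kb: "\<bar>Y - Pi * L ^ l\<bar> \<le> real l * L ^ (l - 1) * ((\<Sum>p\<in>A. \<bar>g p\<bar> * ln (real p)) * (\<Prod>p\<in>A. 1 + \<bar>g p\<bar>))"
  proof -
    show ?thesis unfolding Y_def Pi_def by (rule key_bound[OF fA lnA L0 l])
  qed
  have bnd: "(\<Sum>p\<in>A. \<bar>g p\<bar> * ln (real p)) * (\<Prod>p\<in>A. 1 + \<bar>g p\<bar>) \<le> Cst * beta H0 * Pi"
  proof -
    have s: "(\<Sum>p\<in>A. \<bar>g p\<bar> * ln (real p)) \<le> (2 * K + W / ln 2) * beta H0" by (rule sum_bound[OF fA pA])
    have p: "(\<Prod>p\<in>A. 1 + \<bar>g p\<bar>) \<le> exp (4 * W) * Pi" unfolding Pi_def by (rule prod_bound[OF fA pA])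
    have s0: "(\<Sum>p\<in>A. \<bar>g p\<bar> * ln (real p)) \<ge> 0" using lnA by (intro sum_nonneg) simp
    have p0: "(\<Prod>p\<in>A. 1 + \<bar>g p\<bar>) \<ge> 0" by (intro prod_nonneg) auto
    have "(\<Sum>p\<in>A. \<bar>g p\<bar> * ln (real p)) * (\<Prod>p\<in>A. 1 + \<bar>g p\<bar>) \<le> ((2 * K + W / ln 2) * beta H0) * (exp (4 * W) * Pi)"
      by (rule mult_mono[OF s p]) (use s0 s p0 in auto)
    thus ?thesis unfolding Cst_def by (simp add: mult_ac)
  qed
  have kb2: "\<bar>Y - Pi * L ^ l\<bar> \<le> real l * L ^ (l - 1) * (Cst * beta H0 * Pi)"
    using kb bnd L0 by (smt (verit) mult_left_mono zero_le_power of_nat_0_le_iff mult_nonneg_nonneg)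
  have "\<bar>ydag H R l r - sing H * (P * Pi) * L ^ l / fact l\<bar> = (sing H / fact l * P) * \<bar>Y - Pi * L ^ l\<bar>"
  proof -
    have "ydag H R l r - sing H * (P * Pi) * L ^ l / fact l = (sing H / fact l * P) * (Y - Pi * L ^ l)"
      unfolding yd by (simp add: field_simps)
    moreover have "sing H / fact l * P \<ge> 0" using S0 P0 by simp
    ultimately show ?thesis by (metis abs_mult abs_of_nonneg)
  qed
  also have "\<dots> \<le> (sing H / fact l * P) * (real l * L ^ (l - 1) * (Cst * beta H0 * Pi))"
    using S0 P0 kb2 by (intro mult_left_mono) auto
  also have "\<dots> = sing H * (P * Pi) * (real l / fact l) * Cst * beta H0 * L ^ (l - 1)"
    by (simp add: mult_ac)
  finally show ?thesis unfolding cQ L_def .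
qed

end


context hset begin

lemma admH: "admissible H" unfolding admissible_def using nu0_lt nu_le0 le_less_trans by blast
lemma admH0: "admissible H0" using adm .

lemma cQ_lim: "(\<lambda>Q. sing H * (\<Prod>p\<in>PP Q. 1 + g p)) \<longlonglongrightarrow> sing H0"
proof -
  have rel: "(\<Prod>p\<in>PP Q. 1 + g p) = (\<Prod>i\<le>Q. sfac H0 i) / (\<Prod>i\<le>Q. sfac H i)" for Q
  proof -
    have pp: "PP Q = {x \<in> {..Q}. prime x}" unfolding PP_def by auto
    have "(\<Prod>i\<le>Q. sfac H0 i) = (\<Prod>i\<le>Q. sfac H i * (if prime i then 1 + g i else 1))"
      using sfac_rel by simp
    also have "\<dots> = (\<Prod>i\<le>Q. sfac H i) * (\<Prod>i\<le>Q. if prime i then 1 + g i else 1)"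
      by (rule prod.distrib)
    also have "(\<Prod>i\<le>Q. if prime i then 1 + g i else 1) = (\<Prod>p\<in>PP Q. 1 + g p)"
      unfolding pp by (rule prod.inter_filter[symmetric]) simp
    finally have e: "(\<Prod>i\<le>Q. sfac H0 i) = (\<Prod>i\<le>Q. sfac H i) * (\<Prod>p\<in>PP Q. 1 + g p)" .
    have "(\<Prod>i\<le>Q. sfac H i) > 0" using sfac_pos[OF admH] by (intro prod_pos) auto
    hence "(\<Prod>i\<le>Q. sfac H i) \<noteq> 0" by linarith
    thus ?thesis unfolding e by (rule nonzero_mult_div_cancel_left[symmetric])
  qed
  have l0: "(\<lambda>Q. \<Prod>i\<le>Q. sfac H0 i) \<longlonglongrightarrow> sing H0" by (rule sing_lim(1)[OF finH0 admH0])
  have l1: "(\<lambda>Q. \<Prod>i\<le>Q. sfac H i) \<longlonglongrightarrow> sing H" by (rule sing_lim(1)[OF finH admH])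
  have S: "sing H > 0" by (rule sing_lim(2)[OF finH admH])
  have "(\<lambda>Q. (\<Prod>i\<le>Q. sfac H0 i) / (\<Prod>i\<le>Q. sfac H i)) \<longlonglongrightarrow> sing H0 / sing H"
    using S by (intro tendsto_divide l0 l1) auto
  hence "(\<lambda>Q. sing H * ((\<Prod>i\<le>Q. sfac H0 i) / (\<Prod>i\<le>Q. sfac H i))) \<longlonglongrightarrow> sing H * (sing H0 / sing H)"
    by (rule tendsto_mult_left)
  thus ?thesis unfolding rel using S by simp
qed

lemma main_sqf:
  assumes l: "1 \<le> l" and r: "squarefree r" "0 < r" "real r < R" "coprime r (A0 H)"
  shows "\<bar>ydag H R l r - sing H0 * (ln (R / real r)) ^ l / fact l\<bar>
      \<le> sing H0 * (real l / fact l) * Cst * beta H0 * (ln (R / real r)) ^ (l - 1)"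
proof -
  define L where "L = ln (R / real r)"
  define c where "c = (\<lambda>Q. sing H * (\<Prod>p\<in>PP Q. 1 + g p))"
  define X where "X = (\<lambda>Q. \<bar>ydag H R l r - c Q * L ^ l / fact l\<bar> - c Q * (real l / fact l) * Cst * beta H0 * L ^ (l - 1))"
  have cl: "c \<longlonglongrightarrow> sing H0" unfolding c_def by (rule cQ_lim)
  have "X \<longlonglongrightarrow> \<bar>ydag H R l r - sing H0 * L ^ l / fact l\<bar> - sing H0 * (real l / fact l) * Cst * beta H0 * L ^ (l - 1)"
    unfolding X_def by (intro tendsto_intros cl) simp_all
  moreover have "\<exists>N. \<forall>Q\<ge>N. X Q \<le> 0"
  proof (intro exI allI impI)
    fix Q assume "Q \<ge> nat \<lceil>R\<rceil>"
    hence Q: "R \<le> real Q" by linarith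
    show "X Q \<le> 0" using perQ[OF l Q r] unfolding X_def c_def L_def by simp
  qed
  ultimately have "\<bar>ydag H R l r - sing H0 * L ^ l / fact l\<bar> - sing H0 * (real l / fact l) * Cst * beta H0 * L ^ (l - 1) \<le> 0"
    by (rule LIMSEQ_le_const2)
  thus ?thesis unfolding L_def by simp
qed

end

theorem lemma12:
  fixes k :: nat
  assumes "k \<ge> 2"
  shows "\<exists>C::real. \<forall>(H::int set) (l::nat) (R::real) (r::nat).
    finite H \<and> card H = k \<and> 0 \<notin> H \<and> admissible (insert 0 H) \<and>
    1 \<le> l \<and> l \<le> k \<and> 1 < R \<and> 0 < r \<and> real r < R \<and> coprime r (A0 H) \<longrightarrow>
    \<bar>ydag H R l r
      - real_of_int ((moebius r)\<^sup>2) * sing (insert 0 H) / fact l * (ln (R / real r)) ^ l\<bar>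
    \<le> C * real_of_int ((moebius r)\<^sup>2) * beta (insert 0 H) * sing (insert 0 H)
        * (ln (2 * R / real r)) ^ (l - 1)"
proof (intro exI allI impI, elim conjE)
  define C where "C = (2 * real k + suminf (wk k) / ln 2) * exp (4 * suminf (wk k))"
  fix H :: "int set" and l :: nat and R :: real and r :: nat
  assume fH: "finite H" and cH: "card H = k" and zH: "0 \<notin> H" and ad: "admissible (insert 0 H)"
    and l1: "1 \<le> l" and lk: "l \<le> k" and R1: "1 < R" and r0: "0 < r" and rR: "real r < R"
    and cop: "coprime r (A0 H)"
  interpret hset H using fH cH zH ad assms by unfold_locales auto
  have CC: "Cst = C" unfolding Cst_def C_def K_def W_def cH ..
  have C0: "C \<ge> 0" using Cst_nonneg CC by simp
  show "\<bar>ydag H R l r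
      - real_of_int ((moebius r)\<^sup>2) * sing (insert 0 H) / fact l * (ln (R / real r)) ^ l\<bar>
    \<le> C * real_of_int ((moebius r)\<^sup>2) * beta (insert 0 H) * sing (insert 0 H)
        * (ln (2 * R / real r)) ^ (l - 1)"
  proof (cases "squarefree r")
    case False
    hence m0: "moebius r = 0" unfolding moebius_def by simp
    have "ydag H R l r = 0" unfolding ydag_def m0 by simp
    thus ?thesis using m0 by simp
  next
    case True
    have m1: "real_of_int ((moebius r)\<^sup>2) = 1"
      unfolding moebius_def using True by (simp add: power_even_eq[symmetric] power_mult_distrib)
    define L where "L = ln (R / real r)"
    have rpos: "real r > 0" using r0 by simp
    have L0: "L \<ge> 0" unfolding L_def using rR rpos by simp
    have L2: "L \<le> ln (2 * R / real r)"
    proof -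
      have "R / real r \<le> 2 * R / real r" using R1 rpos by (simp add: divide_right_mono)
      moreover have "R / real r > 0" using R1 rpos by simp
      ultimately show ?thesis unfolding L_def by simp
    qed
    have S0: "sing H0 > 0" by (rule sing_lim(2)[OF finH0 admH0])
    have b0: "beta H0 \<ge> 0" using beta_low ln_ge_zero[of 2] by linarith
    have fl1: "real l \<le> fact l" using fact_ge_self[of l] by (metis of_nat_fact of_nat_le_iff)
    hence fl: "real l / fact l \<le> 1" by (simp add: divide_le_eq)
    have fl0: "real l / fact l \<ge> 0" by simp
    have "\<bar>ydag H R l r - sing H0 * L ^ l / fact l\<bar> \<le> sing H0 * (real l / fact l) * Cst * beta H0 * L ^ (l - 1)"
      unfolding L_def by (rule main_sqf[OF l1 True r0 rR cop])
    also have "\<dots> \<le> sing H0 * 1 * C * beta H0 * (ln (2 * R / real r)) ^ (l - 1)"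
    proof -
      have a: "sing H0 * (real l / fact l) \<le> sing H0 * 1" using S0 fl by (intro mult_left_mono) auto
      have b: "L ^ (l - 1) \<le> (ln (2 * R / real r)) ^ (l - 1)" using L0 L2 by (intro power_mono)
      have "sing H0 * (real l / fact l) * (C * beta H0) * L ^ (l - 1) \<le> sing H0 * 1 * (C * beta H0) * (ln (2 * R / real r)) ^ (l - 1)"
        using a b S0 C0 b0 fl0 L0 fl1 by (intro mult_mono) (auto intro: mult_nonneg_nonneg)
      thus ?thesis unfolding CC by (simp add: mult_ac)
    qed
    finally show ?thesis unfolding m1 L_def by (simp add: mult_ac)
  qed
qed


end
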